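(* Let $p>3$ be prime, let $a,b\in\mathbb{Q}_p$ with $ab\neq 0$, and suppose $(a,b)\in\Delta_1\cup\Delta_3$. Consider the cubic equation $x^3+ax=b$ over $\mathbb{Q}_p$. Then: 1. It is solvable in $(\mathbb{Z}_p^* )^{[3]}$ iff $(a,b)\in\Delta_1$, $|b|_p=1$ and $p\equiv 1 \pmod 3$. 2. It is solvable in $(\mathbb{Z}_p\setminus\mathbb{Z}_p^* )^{[3]}$ iff either [$(a,b)\in\Delta_1$, $|b|_p<1$, $p\equiv 1\pmod 3$] or [$(a,b)\in\Delta_3$, $|a|_p<1$, $\sqrt{-a}$ exists]. 3. It is solvable in $(\mathbb{Q}_p\setminus\mathbb{Z}_p)^{[3]}$ iff either [$(a,b)\in\Delta_1$, $|b|_p>1$, $p\equiv 1\pmod 3$] or [$(a,b)\in\Delta_3$, $|b|_p>|a|_p$, $\sqrt{-a}$ exists]. 4. It is solvable in $(\mathbb{Z}_p\setminus\mathbb{Z}_p^* )^{[1]}\sqcup(\mathbb{Z}_p^* )^{[2]}$ iff $(a,b)\in\Delta_3$, $|a|_p=1$ and $\sqrt{-a}$ exists. 5. It is solvable in $(\mathbb{Z}_p^* )^{[1]}\sqcup(\mathbb{Q}_p\setminus\mathbb{Z}_p)^{[2]}$ iff $(a,b)\in\Delta_3$, $|a|_p=|b|_p$ and $\sqrt{-a}$ exists. 6. It is solvable in $(\mathbb{Z}_p\setminus\mathbb{Z}_p^* )^{[1]}\sqcup(\mathbb{Q}_p\setminus\mathbb{Z}_p)^{[2]}$ iff $(a,b)\in\Delta_3$,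 $|a|_p>|b|_p$, $|a|_p>1$ and $\sqrt{-a}$ exists. 7. It is solvable in $(\mathbb{Z}_p^* )^{[1]}$ iff either [$(a,b)\in\Delta_1$, $|b|_p=1$, $p\equiv 2\pmod 3$] or [$(a,b)\in\Delta_3$, $|a|_p=|b|_p$, $\sqrt{-a}$ does not exist]. 8. It is solvable in $(\mathbb{Z}_p\setminus\mathbb{Z}_p^* )^{[1]}$ iff either [$(a,b)\in\Delta_1$, $|b|_p<1$, $p\equiv 2\pmod 3$] or [$(a,b)\in\Delta_3$, $|a|_p>|b|_p$, $\sqrt{-a}$ does not exist]. 9. It is solvable in $(\mathbb{Q}_p\setminus\mathbb{Z}_p)^{[1]}$ iff either [$(a,b)\in\Delta_1$, $|b|_p>1$, $p\equiv 2\pmod 3$] or [$(a,b)\in\Delta_3$, $|a|_p<|b|_p$, $\sqrt{-a}$ does not exist].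
   Context: $\mathbb{Z}_p=\{x\in\mathbb{Q}_p:|x|_p\le1\}$, $\mathbb{Z}_p^*=\{x:|x|_p=1\}$. Every nonzero $c\in\mathbb{Q}_p$ is written $c=c^*/|c|_p$ with $c^*\in\mathbb{Z}_p^*$, $c^*=c_0+c_1p+c_2p^2+\cdots$, $c_0\in\{1,\dots,p-1\}$, $c_i\in\{0,\dots,p-1\}$. For nonzero $c$: "$\sqrt{c}$ exists" means $c_0^{(p-1)/2}\equiv 1\pmod p$ and $\log_p|c|_p$ is even; "$\sqrt[3]{c}$ exists" means $c_0^{(p-1)/\gcd(3,p-1)}\equiv 1\pmod p$ and $\log_p|c|_p$ is divisible by $3$ (equivalently, $x^2=c$, resp. $x^3=c$, is solvable in $\mathbb{Q}_p$). With $a_0,b_0$ the leading digits of $a^*,b^*$: $D_0=-4a_0^3-27b_0^2$, and integers $u_n$ are defined by $u_1=0,\ u_2=-a_0,\ u_3=b_0,\ u_{n+3}=b_0u_n-a_0u_{n+1}$. Sets: $\Delta_1=\{(a,b): |a|_p^3<|b|_p^2,\ \sqrt[3]{b}\text{ exists}\}$, $\Delta_2=\{(a,b): |a|_p^3=|b|_p^2,\ D_0u_{p-2}^2\not\equiv 9a_0^2 \pmod p\}$, $\Delta_3=\{(a,b): |a|_p^3>|b|_p^2\}$. Roots of $x^3+ax=b$ are taken in $\mathbb{Q}_p$ and counted with multiplicity. For $A\subset\mathbb{Q}_p$ and $n\in\{1,3\}$, "solvable in $A^{[n]}$" means the equation has exactly $n$ roots in $\mathbb{Q}_p$ (with multiplicity)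 and all lie in $A$. For disjoint $A,B$ and $m,n>0$, $m+n=3$, "solvable in $A^{[n]}\sqcup B^{[m]}$" means exactly $n$ of its roots (with multiplicity) lie in $A$ and exactly $m$ lie in $B$. *)

theory Defs
  imports "HOL-Computational_Algebra.Computational_Algebra" "HOL-Library.Cardinality"
begin

class prime_card = assumes prime_card: "prime (CARD('a))"

lemma prime_card_int: "prime (int CARD('a::prime_card))"
  using prime_card by simp

lemma prime_card_gt1: "int CARD('a::prime_card) > 1"
  using prime_card_int[where 'a='a] prime_gt_1_int by blast

section \<open>p-adic integers as coherent sequences (x_n mod p^n)\<close>

definition zp_seqs :: "int \<Rightarrow> (nat \<Rightarrow> int) set" where
  "zp_seqs p = {f. \<forall>n. f n = f (Suc n) mod p ^ n}"

typedef (overloaded) ('p::prime_card) zp = "zp_seqs (int CARD('p))"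
  by (rule exI[of _ "\<lambda>_. 0"]) (simp add: zp_seqs_def)

setup_lifting type_definition_zp

abbreviation pp :: "'p::prime_card itself \<Rightarrow> int" where
  "pp _ \<equiv> int CARD('p)"

lemma zp_seqs_mod:
  assumes "f \<in> zp_seqs p" shows "f n = f n mod p ^ n"
proof -
  have "f n = f (Suc n) mod p ^ n" using assms unfolding zp_seqs_def by blast
  then show ?thesis by (metis mod_mod_trivial)
qed

lemma zp_seqs_I:
  assumes "\<And>n. F (Suc n) mod p ^ n = F n mod p ^ n"
  shows "(\<lambda>n. F n mod p ^ n) \<in> zp_seqs p"
  unfolding zp_seqs_def mem_Collect_eq
proof
  fix n
  have "p ^ n dvd p ^ Suc n" by (rule le_imp_power_dvd) simp
  then have "F (Suc n) mod p ^ Suc n mod p ^ n = F (Suc n) mod p ^ n"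
    by (rule mod_mod_cancel)
  then show "F n mod p ^ n = F (Suc n) mod p ^ Suc n mod p ^ n"
    by (rule trans[OF assms[of n, symmetric] sym])
qed

lemma zp_seqs_step:
  assumes "f \<in> zp_seqs p" shows "f (Suc n) mod p ^ n = f n mod p ^ n"
proof -
  have "f n = f (Suc n) mod p ^ n" using assms unfolding zp_seqs_def by blast
  then show ?thesis by (metis mod_mod_trivial)
qed

instantiation zp :: (prime_card) comm_ring_1
begin

lift_definition zero_zp :: "'a zp" is "\<lambda>_. 0"
  by (simp add: zp_seqs_def)

lift_definition one_zp :: "'a zp" is "\<lambda>n. 1 mod (int CARD('a)) ^ n"
  by (rule zp_seqs_I) simp

lift_definition plus_zp :: "'a zp \<Rightarrow> 'a zp \<Rightarrow> 'a zp"
  is "\<lambda>f g n. (f n + g n) mod (int CARD('a)) ^ n"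
  by (rule zp_seqs_I) (rule mod_add_cong; rule zp_seqs_step; assumption)

lift_definition uminus_zp :: "'a zp \<Rightarrow> 'a zp"
  is "\<lambda>f n. (- f n) mod (int CARD('a)) ^ n"
  by (rule zp_seqs_I) (rule mod_minus_cong, rule zp_seqs_step, assumption)

lift_definition minus_zp :: "'a zp \<Rightarrow> 'a zp \<Rightarrow> 'a zp"
  is "\<lambda>f g n. (f n - g n) mod (int CARD('a)) ^ n"
  by (rule zp_seqs_I) (rule mod_diff_cong; rule zp_seqs_step; assumption)

lift_definition times_zp :: "'a zp \<Rightarrow> 'a zp \<Rightarrow> 'a zp"
  is "\<lambda>f g n. (f n * g n) mod (int CARD('a)) ^ n"
  by (rule zp_seqs_I) (rule mod_mult_cong; rule zp_seqs_step; assumption)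

instance
proof
  fix x y z :: "'a zp"
  note defs = Rep_zp_inject[symmetric] fun_eq_iff plus_zp.rep_eq times_zp.rep_eq
    uminus_zp.rep_eq minus_zp.rep_eq zero_zp.rep_eq one_zp.rep_eq
  have R: "Rep_zp w n mod int CARD('a) ^ n = Rep_zp w n" for w :: "'a zp" and n
    using zp_seqs_mod[OF Rep_zp[of w], of n] by (rule sym)
  show "x * y * z = x * (y * z)"
    unfolding defs by (simp add: mod_simps algebra_simps)
  show "x * y = y * x"
    unfolding defs by (simp add: mod_simps algebra_simps)
  show "1 * x = x"
    unfolding defs by (simp add: mod_simps R)
  show "x + y + z = x + (y + z)"
    unfolding defs by (simp add: mod_simps algebra_simps)
  show "x + y = y + x"
    unfolding defs by (simp add: mod_simps algebra_simps)
  show "0 + x = x"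
    unfolding defs by (simp add: R)
  show "- x + x = 0"
    unfolding defs by (simp add: mod_simps)
  show "x - y = x + - y"
    unfolding defs by (simp add: mod_simps)
  show "(x + y) * z = x * z + y * z"
    unfolding defs by (simp add: mod_simps algebra_simps)
  show "(0::'a zp) \<noteq> 1"
  proof
    assume "(0::'a zp) = 1"
    then have "Rep_zp (0::'a zp) 1 = Rep_zp (1::'a zp) 1" by simp
    then show False using prime_card_gt1[where 'a='a]
      by (simp add: zero_zp.rep_eq one_zp.rep_eq)
  qed
qed

end

lemma zp_seqs_le:
  assumes "f \<in> zp_seqs p" "m \<le> n" shows "f m = f n mod p ^ m"
  using assms(2)
proof (induction n rule: dec_induct)
  case base
  then show ?case by (rule zp_seqs_mod[OF assms(1)])
next
  case (step n)
  have "p ^ m dvd p ^ n" using step(1) by (rule le_imp_power_dvd)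
  then have "f (Suc n) mod p ^ n mod p ^ m = f (Suc n) mod p ^ m"
    by (rule mod_mod_cancel)
  moreover have "f n = f (Suc n) mod p ^ n"
    using assms(1) unfolding zp_seqs_def by blast
  ultimately show ?case using step(3) by simp
qed

lemma zp_nonzero_exact:
  fixes x :: "'a::prime_card zp"
  assumes "x \<noteq> 0"
  shows "\<exists>k. \<forall>n>k. int CARD('a) ^ k dvd Rep_zp x n \<and> \<not> int CARD('a) ^ Suc k dvd Rep_zp x n"
proof -
  define p where "p = int CARD('a)"
  have p1: "p > 1" unfolding p_def by (rule prime_card_gt1)
  define f where "f = Rep_zp x"
  have fS: "f \<in> zp_seqs p" unfolding f_def p_def by (rule Rep_zp)
  have "f \<noteq> (\<lambda>_. 0)"
  proof
    assume "f = (\<lambda>_. 0)"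
    then have "Rep_zp x = Rep_zp 0" by (simp add: f_def zero_zp.rep_eq)
    then show False using assms Rep_zp_inject by blast
  qed
  then have ex: "\<exists>a. f a \<noteq> 0" by auto
  define a where "a = (LEAST a. f a \<noteq> 0)"
  have fa: "f a \<noteq> 0" unfolding a_def using ex by (rule LeastI_ex)
  have f0: "f 0 = 0" using zp_seqs_mod[OF fS, of 0] by simp
  have a0: "a \<noteq> 0"
  proof
    assume "a = 0" then show False using fa f0 by simp
  qed
  then obtain k where ak: "a = Suc k" by (cases a) auto
  have fk: "f k = 0" using not_less_Least[of k "\<lambda>a. f a \<noteq> 0"] ak a_def by auto
  show ?thesis
  proof (intro exI allI impI conjI)
    fix n assume "k < n"
    then have kn: "k \<le> n" "Suc k \<le> n" by auto
    have "f n mod p ^ k = 0" using zp_seqs_le[OF fS kn(1)] fk by simp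
    then show "int CARD('a) ^ k dvd Rep_zp x n" by (simp add: f_def p_def dvd_eq_mod_eq_0)
    have "f n mod p ^ Suc k \<noteq> 0" using zp_seqs_le[OF fS kn(2)] fa ak by simp
    then show "\<not> int CARD('a) ^ Suc k dvd Rep_zp x n" by (simp add: f_def p_def dvd_eq_mod_eq_0)
  qed
qed

instance zp :: (prime_card) idom
proof
  fix x y :: "'a zp"
  assume x: "x \<noteq> 0" and y: "y \<noteq> 0"
  define p where "p = int CARD('a)"
  have pp: "prime p" unfolding p_def by (rule prime_card_int)
  obtain k where k: "\<And>n. n > k \<Longrightarrow> p ^ k dvd Rep_zp x n \<and> \<not> p ^ Suc k dvd Rep_zp x n"
    using zp_nonzero_exact[OF x] unfolding p_def by blast
  obtain l where l: "\<And>n. n > l \<Longrightarrow> p ^ l dvd Rep_zp y n \<and> \<not> p ^ Suc l dvd Rep_zp y n"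
    using zp_nonzero_exact[OF y] unfolding p_def by blast
  define n where "n = Suc (k + l)"
  have kn: "n > k" and ln: "n > l" unfolding n_def by auto
  obtain u where u: "Rep_zp x n = p ^ k * u" using k[OF kn] by (auto elim: dvdE)
  obtain w where w: "Rep_zp y n = p ^ l * w" using l[OF ln] by (auto elim: dvdE)
  have pk: "p ^ k \<noteq> 0" "p ^ l \<noteq> 0" using pp by (auto simp: prime_gt_0_int)
  have nu: "\<not> p dvd u"
  proof
    assume "p dvd u"
    then have "p ^ k * p dvd p ^ k * u" by simp
    then show False using k[OF kn] u by (simp add: power_Suc2)
  qed
  have nw: "\<not> p dvd w"
  proof
    assume "p dvd w"
    then have "p ^ l * p dvd p ^ l * w" by simp
    then show False using l[OF ln] w by (simp add: power_Suc2)
  qed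
  show "x * y \<noteq> 0"
  proof
    assume "x * y = 0"
    then have "Rep_zp (x * y) n = 0" by (simp add: zero_zp.rep_eq)
    then have "p ^ n dvd Rep_zp x n * Rep_zp y n"
      by (simp add: times_zp.rep_eq p_def dvd_eq_mod_eq_0)
    then have d: "p ^ n dvd (p ^ k * u) * (p ^ l * w)" by (simp only: u w)
    have e1: "p ^ n = p ^ (k + l) * p" by (simp add: n_def power_Suc2)
    have e2: "(p ^ k * u) * (p ^ l * w) = p ^ (k + l) * (u * w)"
      by (simp add: power_add algebra_simps)
    have pkl: "p ^ (k + l) \<noteq> 0" using pk by (simp add: power_add)
    have "p ^ (k + l) * p dvd p ^ (k + l) * (u * w)" using d by (simp only: e1 e2)
    then have "p dvd u * w" using pkl by (simp only: dvd_mult_cancel_left) simp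
    then show False using nu nw pp by (simp add: prime_dvd_mult_iff)
  qed
qed

type_synonym 'p qp = "'p zp fract"

definition zp_to_qp :: "'p::prime_card zp \<Rightarrow> 'p qp" where
  "zp_to_qp z = Fract z 1"

definition qp_p :: "'p::prime_card qp" where
  "qp_p = of_nat CARD('p)"

definition qp_val :: "'p::prime_card qp \<Rightarrow> int" where
  "qp_val x = (THE k. \<exists>u. u dvd 1 \<and> x = zp_to_qp u * qp_p powi k)"

definition padic_abs :: "'p::prime_card qp \<Rightarrow> real" where
  "padic_abs x = (if x = 0 then 0 else real CARD('p) powi (- qp_val x))"

definition qp_star :: "'p::prime_card qp \<Rightarrow> 'p qp" where
  "qp_star c = c * qp_p powi (- qp_val c)"

text \<open>Leading digit c_0 of c* = c_0 + c_1 p + ...: the unique c_0 in {1..p-1}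
  with |c* - c_0|_p < 1.\<close>

definition qp_digit0 :: "'p::prime_card qp \<Rightarrow> nat" where
  "qp_digit0 c = (THE d. d \<in> {1..CARD('p) - 1} \<and> padic_abs (qp_star c - of_nat d) < 1)"

text \<open>log_p |c|_p = - qp_val c.\<close>

definition sqrt_exists :: "'p::prime_card qp \<Rightarrow> bool" where
  "sqrt_exists c \<longleftrightarrow> c \<noteq> 0 \<and>
     qp_digit0 c ^ ((CARD('p) - 1) div 2) mod CARD('p) = 1 \<and> even (- qp_val c)"

definition cbrt_exists :: "'p::prime_card qp \<Rightarrow> bool" where
  "cbrt_exists c \<longleftrightarrow> c \<noteq> 0 \<and>
     qp_digit0 c ^ ((CARD('p) - 1) div gcd 3 (CARD('p) - 1)) mod CARD('p) = 1 \<and>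
     (3::int) dvd (- qp_val c)"

definition Delta1 :: "('p::prime_card qp \<times> 'p qp) set" where
  "Delta1 = {(a, b). padic_abs a ^ 3 < padic_abs b ^ 2 \<and> cbrt_exists b}"

definition Delta3 :: "('p::prime_card qp \<times> 'p qp) set" where
  "Delta3 = {(a, b). padic_abs a ^ 3 > padic_abs b ^ 2}"

definition Zp_set :: "'p::prime_card qp set" where
  "Zp_set = {x. padic_abs x \<le> 1}"

definition Zp_units :: "'p::prime_card qp set" where
  "Zp_units = {x. padic_abs x = 1}"

definition cubic_poly :: "'p::prime_card qp \<Rightarrow> 'p qp \<Rightarrow> 'p qp poly" where
  "cubic_poly a b = [:- b, a, 0, 1:]"

definition root_count :: "'p::prime_card qp \<Rightarrow> 'p qp \<Rightarrow> 'p qp set \<Rightarrow> nat" where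
  "root_count a b A = (\<Sum>r \<in> {r \<in> A. poly (cubic_poly a b) r = 0}. order r (cubic_poly a b))"

text \<open>Solvable in A^[n]: exactly n roots (with multiplicity) in Q_p, all in A.\<close>

definition solvable_in :: "'p::prime_card qp \<Rightarrow> 'p qp \<Rightarrow> 'p qp set \<Rightarrow> nat \<Rightarrow> bool" where
  "solvable_in a b A n \<longleftrightarrow> root_count a b UNIV = n \<and> root_count a b A = n"

text \<open>Solvable in A^[n] disjoint-union B^[m]: exactly n roots in A and exactly m in B.\<close>

definition solvable_in2 ::
  "'p::prime_card qp \<Rightarrow> 'p qp \<Rightarrow> 'p qp set \<Rightarrow> nat \<Rightarrow> 'p qp set \<Rightarrow> nat \<Rightarrow> bool" where
  "solvable_in2 a b A n B m \<longleftrightarrow> root_count a b A = n \<and> root_count a b B = m"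

end

theory Submission
  imports Defs "HOL-Number_Theory.Number_Theory"
begin


abbreviation PP :: "'p::prime_card zp" where "PP \<equiv> of_nat CARD('p)"

lemma pcard_gt1: "CARD('p::prime_card) > 1"
  using prime_card[where 'a='p] prime_gt_1_nat by blast

lemma rep_range:
  fixes x :: "'p::prime_card zp"
  shows "0 \<le> Rep_zp x n \<and> Rep_zp x n < int CARD('p) ^ n"
proof -
  have "Rep_zp x n = Rep_zp x n mod int CARD('p) ^ n" using zp_seqs_mod[OF Rep_zp[of x]] .
  moreover have "int CARD('p) ^ n > 0" using prime_card_gt1[where 'a='p] by simp
  ultimately show ?thesis by (metis pos_mod_bound pos_mod_sign)
qed

lemma rep_mod: "Rep_zp (x::'p::prime_card zp) n mod int CARD('p) ^ n = Rep_zp x n"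
  using zp_seqs_mod[OF Rep_zp[of x]] by simp

lemma rep_le: "m \<le> n \<Longrightarrow> Rep_zp (x::'p::prime_card zp) m = Rep_zp x n mod int CARD('p) ^ m"
  using zp_seqs_le[OF Rep_zp[of x]] by blast

lemma zp_eq_iff: "(x::'p::prime_card zp) = y \<longleftrightarrow> (\<forall>n. Rep_zp x n = Rep_zp y n)"
  by (metis Rep_zp_inject ext)

lemma rep_of_nat: "Rep_zp (of_nat k :: 'p::prime_card zp) n = int k mod int CARD('p) ^ n"
proof (induction k)
  case 0 then show ?case by (simp add: zero_zp.rep_eq)
next
  case (Suc k)
  have "(of_nat (Suc k) :: 'p zp) = 1 + of_nat k" by simp
  then show ?case using Suc by (simp only:) (simp add: plus_zp.rep_eq one_zp.rep_eq mod_simps)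
qed

lemma rep_of_int: "Rep_zp (of_int k :: 'p::prime_card zp) n = k mod int CARD('p) ^ n"
proof (cases "k \<ge> 0")
  case True
  then obtain m where "k = int m" by (metis nonneg_int_cases)
  then show ?thesis by (simp add: rep_of_nat)
next
  case False
  then have "k = - int (nat (-k))" by simp
  then obtain m where "k = - int m" by blast
  then show ?thesis by (simp add: uminus_zp.rep_eq rep_of_nat mod_simps)
qed

lemma rep_power: "Rep_zp ((x::'p::prime_card zp) ^ k) n = Rep_zp x n ^ k mod int CARD('p) ^ n"
proof (induction k)
  case 0 then show ?case by (simp add: one_zp.rep_eq)
next
  case (Suc k) then show ?case by (simp add: times_zp.rep_eq mod_simps)
qed

lemma rep_diff_zero: "Rep_zp ((x::'p::prime_card zp) - y) n = 0 \<longleftrightarrow> Rep_zp x n = Rep_zp y n"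
proof -
  have r1: "0 \<le> Rep_zp x n" "Rep_zp x n < int CARD('p) ^ n" using rep_range by blast+
  have r2: "0 \<le> Rep_zp y n" "Rep_zp y n < int CARD('p) ^ n" using rep_range by blast+
  have "Rep_zp (x - y) n = (Rep_zp x n - Rep_zp y n) mod int CARD('p) ^ n" by (simp add: minus_zp.rep_eq)
  also have "\<dots> = 0 \<longleftrightarrow> int CARD('p) ^ n dvd (Rep_zp x n - Rep_zp y n)" by (simp add: dvd_eq_mod_eq_0)
  also have "\<dots> \<longleftrightarrow> Rep_zp x n - Rep_zp y n = 0"
  proof
    assume d: "int CARD('p) ^ n dvd Rep_zp x n - Rep_zp y n"
    show "Rep_zp x n - Rep_zp y n = 0"
    proof (rule ccontr)
      assume ne: "Rep_zp x n - Rep_zp y n \<noteq> 0"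
      have "int CARD('p) ^ n \<le> \<bar>Rep_zp x n - Rep_zp y n\<bar>" using dvd_imp_le_int[OF ne d] by simp
      then show False using r1 r2 by linarith
    qed
  qed simp
  finally show ?thesis by simp
qed

lemma rep_PP_pow: "Rep_zp ((PP::'p::prime_card zp) ^ n) n = 0"
  by (simp add: rep_power rep_of_nat mod_simps)

lemma div_p:
  fixes x :: "'p::prime_card zp"
  assumes "Rep_zp x 1 = 0"
  shows "\<exists>y. x = PP * y \<and> (\<forall>m. Rep_zp y m = Rep_zp x (Suc m) div int CARD('p))"
proof -
  define p where "p = int CARD('p)"
  have p1: "p > 1" unfolding p_def by (rule prime_card_gt1)
  have dv: "p dvd Rep_zp x m" if "m \<ge> 1" for m
  proof -
    have "Rep_zp x 1 = Rep_zp x m mod p ^ 1" unfolding p_def using that by (rule rep_le)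
    then show ?thesis using assms by (simp add: dvd_eq_mod_eq_0)
  qed
  define f where "f = (\<lambda>m. Rep_zp x (Suc m) div p)"
  have fS: "f \<in> zp_seqs (int CARD('p))"
    unfolding zp_seqs_def mem_Collect_eq
  proof
    fix m
    obtain Y where Y: "Rep_zp x (Suc (Suc m)) = p * Y" using dv[of "Suc (Suc m)"] by auto
    have "Rep_zp x (Suc m) = Rep_zp x (Suc (Suc m)) mod p ^ Suc m" unfolding p_def by (rule rep_le) simp
    also have "\<dots> = (p * Y) mod (p * p ^ m)" using Y by (simp only: power_Suc)
    also have "\<dots> = p * (Y mod p ^ m)" by (rule mult_mod_right[symmetric])
    finally have "Rep_zp x (Suc m) div p = Y mod p ^ m" using p1 by simp
    moreover have "Rep_zp x (Suc (Suc m)) div p = Y" using Y p1 by simp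
    ultimately show "f m = f (Suc m) mod int CARD('p) ^ m" unfolding f_def p_def by simp
  qed
  define y where "y = (Abs_zp f :: 'p zp)"
  have ry: "Rep_zp y m = f m" for m unfolding y_def using Abs_zp_inverse[OF fS] by simp
  have "x = PP * y"
    unfolding zp_eq_iff
  proof
    fix m
    obtain Z where Z: "Rep_zp x (Suc m) = p * Z" using dv[of "Suc m"] by auto
    have "Rep_zp (PP * y) m = (p * f m) mod p ^ m"
      by (simp add: times_zp.rep_eq rep_of_nat ry p_def mod_simps)
    also have "\<dots> = Rep_zp x (Suc m) mod p ^ m" using Z p1 by (simp add: f_def)
    also have "\<dots> = Rep_zp x m" unfolding p_def by (rule rep_le[symmetric]) simp
    finally show "Rep_zp x m = Rep_zp (PP * y) m" by simp
  qed
  then show ?thesis using ry f_def p_def by blast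
qed

lemma dvd_iff_rep: "(PP::'p::prime_card zp) ^ n dvd x \<longleftrightarrow> Rep_zp x n = 0"
proof
  assume "PP ^ n dvd x"
  then obtain y where "x = PP ^ n * y" by auto
  then show "Rep_zp x n = 0" by (simp add: times_zp.rep_eq rep_PP_pow)
next
  assume "Rep_zp x n = 0"
  then show "PP ^ n dvd x"
  proof (induction n arbitrary: x)
    case 0 then show ?case by simp
  next
    case (Suc n)
    have "Rep_zp x 1 = Rep_zp x (Suc n) mod int CARD('p) ^ 1" using rep_le[of 1 "Suc n"] by simp
    then have "Rep_zp x 1 = 0" using Suc.prems by simp
    then obtain y where y: "x = PP * y" "\<And>m. Rep_zp y m = Rep_zp x (Suc m) div int CARD('p)"
      using div_p by blast
    have "Rep_zp y n = 0" using y(2) Suc.prems by simp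
    then have "PP ^ n dvd y" by (rule Suc.IH)
    then show ?case using y(1) by (simp add: mult_dvd_mono)
  qed
qed

lemma cong_iff: "(PP::'p::prime_card zp) ^ n dvd (x - y) \<longleftrightarrow> Rep_zp x n = Rep_zp y n"
  by (simp add: dvd_iff_rep rep_diff_zero)

lemma zero_iff: "(x::'p::prime_card zp) = 0 \<longleftrightarrow> (\<forall>n. PP ^ n dvd x)"
  by (auto simp: dvd_iff_rep zp_eq_iff zero_zp.rep_eq)

lemma cauchy_chain:
  fixes s :: "nat \<Rightarrow> 'p::prime_card zp"
  assumes "\<And>k. PP ^ k dvd (s (Suc k) - s k)"
  shows "k \<le> m \<Longrightarrow> PP ^ k dvd (s m - s k)"
proof (induction m rule: dec_induct)
  case base then show ?case by simp
next
  case (step m)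
  have "PP ^ k dvd (PP::'p zp) ^ m" using step(1) by (simp add: le_imp_power_dvd)
  then have "PP ^ k dvd (s (Suc m) - s m)" using assms dvd_trans by blast
  have eq: "s (Suc m) - s k = (s (Suc m) - s m) + (s m - s k)" by simp
  show ?case unfolding eq using \<open>PP ^ k dvd (s (Suc m) - s m)\<close> step(3) by (rule dvd_add)
qed

lemma zp_limit:
  fixes s :: "nat \<Rightarrow> 'p::prime_card zp"
  assumes "\<And>k. PP ^ k dvd (s (Suc k) - s k)"
  shows "\<exists>L. \<forall>k. PP ^ k dvd (L - s k)"
proof -
  define f where "f = (\<lambda>n. Rep_zp (s n) n)"
  have fS: "f \<in> zp_seqs (int CARD('p))"
    unfolding zp_seqs_def mem_Collect_eq
  proof
    fix n
    have "Rep_zp (s (Suc n)) n = Rep_zp (s (Suc n)) (Suc n) mod int CARD('p) ^ n" by (rule rep_le) simp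
    moreover have "Rep_zp (s (Suc n)) n = Rep_zp (s n) n" using assms[of n] cong_iff by blast
    ultimately show "f n = f (Suc n) mod int CARD('p) ^ n" unfolding f_def by simp
  qed
  define L where "L = (Abs_zp f :: 'p zp)"
  have "Rep_zp L k = Rep_zp (s k) k" for k unfolding L_def using Abs_zp_inverse[OF fS] f_def by simp
  then show ?thesis using cong_iff by blast
qed

lemma PP_not_dvd_1: "\<not> (PP::'p::prime_card zp) dvd 1"
proof
  assume "(PP::'p zp) dvd 1"
  then have "Rep_zp (1::'p zp) 1 = 0" using dvd_iff_rep[of 1 "1::'p zp"] by simp
  then show False using prime_card_gt1[where 'a='p] by (simp add: one_zp.rep_eq)
qed

lemma unit_iff: "(x::'p::prime_card zp) dvd 1 \<longleftrightarrow> \<not> PP dvd x"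
proof
  assume "x dvd 1"
  then show "\<not> PP dvd x" using PP_not_dvd_1 dvd_trans by blast
next
  assume nd: "\<not> PP dvd x"
  define p where "p = int CARD('p)"
  have pp: "prime p" unfolding p_def by (rule prime_card_int)
  have r: "Rep_zp x 1 \<noteq> 0" using nd dvd_iff_rep[of 1 x] by simp
  have rr: "0 \<le> Rep_zp x 1" "Rep_zp x 1 < p" using rep_range[of x 1] p_def by auto
  have "\<not> p dvd Rep_zp x 1" using r rr zdvd_not_zless by fastforce
  then have "coprime (Rep_zp x 1) p" using pp by (simp add: prime_imp_coprime coprime_commute)
  then obtain w where w: "[Rep_zp x 1 * w = 1] (mod p)" using cong_solve_coprime_int by blast
  define W where "W = (of_int w :: 'p zp)"
  define e where "e = 1 - x * W"
  have "PP dvd e"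
    unfolding e_def using cong_iff[of 1 "1::'p zp" "x*W"] w
    by (simp add: W_def one_zp.rep_eq times_zp.rep_eq rep_of_int p_def mod_simps cong_def)
  define s where "s = (\<lambda>k. W * (\<Sum>i<k. e ^ i))"
  have "PP ^ k dvd (s (Suc k) - s k)" for k
  proof -
    have "s (Suc k) - s k = W * e ^ k" by (simp add: s_def algebra_simps)
    moreover have "PP ^ k dvd e ^ k" using \<open>PP dvd e\<close> by (simp add: dvd_power_same)
    ultimately show ?thesis by simp
  qed
  then obtain L where L: "\<And>k. PP ^ k dvd (L - s k)" using zp_limit by blast
  have xs: "x * s k = 1 - e ^ k" for k
  proof (induction k)
    case 0 then show ?case by (simp add: s_def)
  next
    case (Suc k)
    have "x * s (Suc k) = x * s k + x * W * e ^ k" by (simp add: s_def algebra_simps)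
    also have "\<dots> = 1 - e ^ k + (1 - e) * e ^ k" using Suc by (simp add: e_def)
    finally show ?case by (simp add: algebra_simps)
  qed
  have "PP ^ k dvd (x * L - 1)" for k
  proof -
    have "PP ^ k dvd x * (L - s k)" using L by simp
    moreover have "PP ^ k dvd e ^ k" using \<open>PP dvd e\<close> by (simp add: dvd_power_same)
    ultimately have "PP ^ k dvd x * (L - s k) - e ^ k" by simp
    moreover have "x * (L - s k) - e ^ k = x * L - 1" using xs[of k] by (simp add: algebra_simps)
    ultimately show ?thesis by simp
  qed
  then have "x * L - 1 = 0" using zero_iff by blast
  then have "1 = x * L" by simp
  then show "x dvd 1" by (rule dvdI)
qed

lemma PP_prime:
  assumes "(PP::'p::prime_card zp) dvd x * y" shows "PP dvd x \<or> PP dvd y"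
proof (rule ccontr)
  assume "\<not> (PP dvd x \<or> PP dvd y)"
  then have "x dvd 1" "y dvd 1" using unit_iff by auto
  then have "x * y dvd 1" using mult_dvd_mono[of x 1 y 1] by simp
  then show False using assms unit_iff by blast
qed

lemma PP_nonzero: "(PP::'p::prime_card zp) \<noteq> 0"
proof
  assume "(PP::'p zp) = 0"
  then have "Rep_zp (PP::'p zp) 2 = 0" by (simp add: zero_zp.rep_eq)
  moreover have "Rep_zp (PP::'p zp) 2 = int CARD('p)"
    using prime_card_gt1[where 'a='p] by (simp add: rep_of_nat power2_eq_square)
  ultimately show False using prime_card_gt1[where 'a='p] by simp
qed

lemma zp_decomp:
  fixes x :: "'p::prime_card zp"
  assumes "x \<noteq> 0"
  shows "\<exists>k u. u dvd 1 \<and> x = PP ^ k * u"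
proof -
  have ex: "\<exists>n. \<not> PP ^ n dvd x" using assms zero_iff by blast
  define n where "n = (LEAST n. \<not> PP ^ n dvd x)"
  have n1: "\<not> PP ^ n dvd x" unfolding n_def using ex by (rule LeastI_ex)
  have "n \<noteq> 0" using n1 by (intro notI) simp
  then obtain k where k: "n = Suc k" by (cases n) auto
  have "PP ^ k dvd x" using not_less_Least[of k "\<lambda>n. \<not> PP ^ n dvd x"] k n_def by auto
  then obtain u where u: "x = PP ^ k * u" by auto
  have "\<not> PP dvd u"
  proof
    assume "PP dvd u"
    then have "PP ^ k * PP dvd x" using u by simp
    then show False using n1 k by (simp add: power_Suc2 mult.commute)
  qed
  then show ?thesis using u unit_iff by blast
qed

lemma zp_decomp_unique:
  fixes u w :: "'p::prime_card zp"
  assumes "u dvd 1" "w dvd 1" "PP ^ k * u = PP ^ l * w"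
  shows "k = l \<and> u = w"
proof -
  have nz: "(PP::'p zp) ^ j \<noteq> 0" for j by (rule power_not_zero[OF PP_nonzero])
  have *: "k = l" if "u dvd 1" "w dvd 1" "PP ^ k * u = PP ^ l * w" "k \<le> l" for k l and u w :: "'p zp"
  proof (rule ccontr)
    assume "k \<noteq> l"
    then have "l = k + (l - k)" "l - k > 0" using that by auto
    then have "PP ^ k * u = PP ^ k * (PP ^ (l - k) * w)" using that(3) by (metis power_add mult.assoc)
    then have "u = PP ^ (l - k) * w" using mult_left_cancel[OF nz[of k]] by blast
    then have "PP dvd u" using \<open>l - k > 0\<close> by (simp add: dvd_power)
    then show False using that(1) unit_iff by blast
  qed
  have "k = l" using *[of u w k l] *[of w u l k] assms by (metis nat_le_linear)
  then show ?thesis using assms(3) mult_left_cancel[OF nz[of k]] by blast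
qed


lemma iota_add: "zp_to_qp (x + y) = zp_to_qp x + zp_to_qp y"
  by (simp add: zp_to_qp_def)
lemma iota_mult: "zp_to_qp (x * y) = zp_to_qp x * zp_to_qp y"
  by (simp add: zp_to_qp_def)
lemma iota_minus: "zp_to_qp (- x) = - zp_to_qp x"
  by (simp add: zp_to_qp_def)
lemma iota_diff: "zp_to_qp (x - y) = zp_to_qp x - zp_to_qp y"
  by (simp add: zp_to_qp_def)
lemma iota_zero: "zp_to_qp 0 = 0"
  by (simp add: zp_to_qp_def Zero_fract_def)
lemma iota_one: "zp_to_qp 1 = 1"
  by (simp add: zp_to_qp_def One_fract_def)
lemma iota_power: "zp_to_qp (x ^ n) = zp_to_qp x ^ n"
  by (induction n) (simp_all add: iota_one iota_mult)
lemma iota_of_nat: "zp_to_qp (of_nat n) = of_nat n"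
  by (simp add: zp_to_qp_def of_nat_fract)
lemma iota_inj: "zp_to_qp x = zp_to_qp y \<longleftrightarrow> x = y"
  by (simp add: zp_to_qp_def eq_fract)
lemma iota_eq_0: "zp_to_qp x = 0 \<longleftrightarrow> x = 0"
  using iota_inj[of x 0] by (simp add: iota_zero)

lemmas iota_simps = iota_add iota_mult iota_minus iota_diff iota_zero iota_one iota_power iota_of_nat

lemma qp_p_iota: "qp_p = zp_to_qp PP"
  by (simp add: qp_p_def iota_of_nat)

lemma qp_p_nonzero: "(qp_p :: 'p::prime_card qp) \<noteq> 0"
  by (simp add: qp_p_iota iota_eq_0 PP_nonzero)

lemma Fract_iota: "y \<noteq> 0 \<Longrightarrow> Fract x y = zp_to_qp x / zp_to_qp y"
  by (simp add: zp_to_qp_def)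

lemma iota_unit_inv:
  assumes "(u::'p::prime_card zp) dvd 1"
  obtains w where "w dvd 1" "zp_to_qp u * zp_to_qp w = 1"
proof -
  obtain w where w: "1 = u * w" using assms by (auto elim: dvdE)
  then have "w dvd 1" by (metis dvd_triv_right)
  moreover have "zp_to_qp u * zp_to_qp w = 1" using w by (metis iota_mult iota_one)
  ultimately show ?thesis using that by blast
qed

lemma powi_split: "(qp_p :: 'p::prime_card qp) powi (m + n) = qp_p powi m * qp_p powi n"
  by (rule power_int_add) (simp add: qp_p_nonzero)

lemma qp_decomp:
  fixes x :: "'p::prime_card qp"
  assumes "x \<noteq> 0"
  shows "\<exists>u k. u dvd 1 \<and> x = zp_to_qp u * qp_p powi k"
proof -
  obtain n d where x: "x = Fract n d" and d: "d \<noteq> 0" by (cases x) auto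
  have n: "n \<noteq> 0" using assms x by (auto simp: Zero_fract_def eq_fract)
  obtain k u where u: "u dvd 1" "n = PP ^ k * u" using zp_decomp[OF n] by blast
  obtain l w where w: "w dvd 1" "d = PP ^ l * w" using zp_decomp[OF d] by blast
  obtain w' where w': "w' dvd 1" "zp_to_qp w * zp_to_qp w' = 1" using iota_unit_inv[OF w(1)] by blast
  have dn: "zp_to_qp d \<noteq> 0" using d iota_eq_0 by blast
  have "x = zp_to_qp (u * w') * qp_p powi (int k - int l)"
  proof -
    have "zp_to_qp (u * w') * qp_p powi (int k - int l) * zp_to_qp d
        = zp_to_qp u * (zp_to_qp w * zp_to_qp w') * (qp_p powi (int k - int l) * qp_p powi (int l))"
      by (simp add: w(2) iota_simps qp_p_def algebra_simps)
    also have "\<dots> = zp_to_qp u * qp_p powi (int k)"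
    proof -
      have "qp_p powi (int k - int l) * qp_p powi (int l) = (qp_p::'p qp) powi (int k)"
        by (subst powi_split[symmetric]) simp
      then show ?thesis by (simp only: w'(2) mult_1_right)
    qed
    also have "\<dots> = zp_to_qp n" by (simp add: u(2) iota_simps qp_p_def algebra_simps)
    finally have "zp_to_qp (u * w') * qp_p powi (int k - int l) = zp_to_qp n / zp_to_qp d"
      using dn by (simp add: field_simps)
    then show ?thesis using x d Fract_iota by simp
  qed
  moreover have "u * w' dvd 1" using mult_dvd_mono[OF u(1) w'(1)] by simp
  ultimately show ?thesis by blast
qed

lemma qp_decomp_unique:
  fixes u w :: "'p::prime_card zp"
  assumes "u dvd 1" "w dvd 1" "zp_to_qp u * qp_p powi k = zp_to_qp w * qp_p powi l"
  shows "k = l \<and> u = w"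
proof -
  have *: "k = l \<and> u = w" if "u dvd 1" "w dvd 1" "zp_to_qp u * qp_p powi k = zp_to_qp w * qp_p powi l" "k \<le> l"
    for k l and u w :: "'p zp"
  proof -
    have e: "qp_p powi l = qp_p powi k * (qp_p::'p qp) powi (l - k)" by (simp flip: powi_split)
    have "zp_to_qp u * qp_p powi k = (zp_to_qp w * qp_p powi (l - k)) * qp_p powi k"
      unfolding that(3) e by (simp only: mult_ac)
    then have "zp_to_qp u = zp_to_qp w * qp_p powi (l - k)"
      using mult_right_cancel[OF power_int_not_zero[of "qp_p::'p qp" k]] qp_p_nonzero by blast
    also have "qp_p powi (l - k) = qp_p ^ nat (l - k)" using that(4) by (simp add: power_int_nonneg_exp)
    finally have "zp_to_qp u = zp_to_qp (PP ^ nat (l - k) * w)"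
      by (simp add: iota_simps qp_p_def algebra_simps)
    then have uu: "u = PP ^ nat (l - k) * w" by (simp add: iota_inj)
    then have "PP ^ k' * u = PP ^ (k' + nat (l - k)) * w" for k'
      by (simp add: power_add algebra_simps)
    then have "nat (l - k) = 0" using zp_decomp_unique[OF that(1) that(2), of 0] by fastforce
    then show ?thesis using uu that(4) by simp
  qed
  show ?thesis using *[OF assms] *[OF assms(2) assms(1) assms(3)[symmetric]] by linarith
qed

lemma qp_val_eq:
  assumes "(u::'p::prime_card zp) dvd 1"
  shows "qp_val (zp_to_qp u * qp_p powi k) = k"
  unfolding qp_val_def
  by (rule the_equality) (use assms qp_decomp_unique in blast)+

lemma qp_star_eq:
  assumes "(u::'p::prime_card zp) dvd 1"
  shows "qp_star (zp_to_qp u * qp_p powi k) = zp_to_qp u"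
  unfolding qp_star_def qp_val_eq[OF assms]
  by (simp add: mult.assoc flip: powi_split)

lemma qp_nonzero_dec:
  assumes "(u::'p::prime_card zp) dvd 1"
  shows "zp_to_qp u * qp_p powi k \<noteq> 0"
proof -
  have "u \<noteq> 0" using assms PP_not_dvd_1 by auto
  then show ?thesis using qp_p_nonzero[where 'p='p] by (simp add: iota_eq_0 power_int_not_zero)
qed


lemma qp_val_mult:
  fixes x y :: "'p::prime_card qp"
  assumes "x \<noteq> 0" "y \<noteq> 0"
  shows "qp_val (x * y) = qp_val x + qp_val y"
proof -
  obtain u k where u: "u dvd 1" "x = zp_to_qp u * qp_p powi k" using qp_decomp[OF assms(1)] by blast
  obtain w l where w: "w dvd 1" "y = zp_to_qp w * qp_p powi l" using qp_decomp[OF assms(2)] by blast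
  have "x * y = zp_to_qp (u * w) * qp_p powi (k + l)"
    unfolding u(2) w(2) powi_split iota_mult by (simp only: mult_ac)
  moreover have "u * w dvd 1" using mult_dvd_mono[OF u(1) w(1)] by simp
  ultimately show ?thesis using u w qp_val_eq by metis
qed

lemma qp_val_minus:
  fixes x :: "'p::prime_card qp"
  assumes "x \<noteq> 0"
  shows "qp_val (- x) = qp_val x"
proof -
  obtain u k where u: "u dvd 1" "x = zp_to_qp u * qp_p powi k" using qp_decomp[OF assms(1)] by blast
  have "- x = zp_to_qp (- u) * qp_p powi k" unfolding u(2) iota_minus by simp
  moreover have "- u dvd 1" using u(1) by simp
  ultimately show ?thesis using u qp_val_eq by metis
qed

lemma qp_val_pi: "qp_val ((qp_p::'p::prime_card qp) powi k) = k"
  using qp_val_eq[of "1::'p zp" k] by (simp add: iota_one)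

lemma qp_val_iota:
  fixes z :: "'p::prime_card zp"
  assumes "z \<noteq> 0"
  shows "qp_val (zp_to_qp z) \<ge> 0 \<and> (qp_val (zp_to_qp z) = 0 \<longleftrightarrow> z dvd 1)"
proof -
  obtain k u where u: "u dvd 1" "z = PP ^ k * u" using zp_decomp[OF assms] by blast
  have "zp_to_qp z = zp_to_qp u * qp_p powi (int k)"
    unfolding u(2) by (simp add: iota_simps qp_p_def mult_ac)
  then have v: "qp_val (zp_to_qp z) = int k" using qp_val_eq[OF u(1), of "int k"] by simp
  have "z dvd 1 \<longleftrightarrow> k = 0"
  proof
    assume "z dvd 1"
    show "k = 0"
    proof (rule ccontr)
      assume "k \<noteq> 0"
      then have "PP dvd z" using u(2) by (simp add: dvd_power)
      then show False using \<open>z dvd 1\<close> unit_iff by blast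
    qed
  qed (use u in simp)
  then show ?thesis using v by simp
qed

lemma iota_nonzero_unit: "(u::'p::prime_card zp) dvd 1 \<Longrightarrow> u \<noteq> 0"
  using PP_not_dvd_1 by auto

lemma qp_val_ultra:
  fixes x y :: "'p::prime_card qp"
  assumes "x \<noteq> 0" "y \<noteq> 0" "x + y \<noteq> 0"
  shows "qp_val (x + y) \<ge> min (qp_val x) (qp_val y) \<and>
         (qp_val x \<noteq> qp_val y \<longrightarrow> qp_val (x + y) = min (qp_val x) (qp_val y))"
proof -
  have *: "qp_val (x + y) \<ge> qp_val x \<and> (qp_val x < qp_val y \<longrightarrow> qp_val (x + y) = qp_val x)"
    if h: "x \<noteq> 0" "y \<noteq> 0" "x + y \<noteq> 0" "qp_val x \<le> qp_val y" for x y :: "'p qp"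
  proof -
    obtain u k where u: "u dvd 1" "x = zp_to_qp u * qp_p powi k" using qp_decomp[OF h(1)] by blast
    obtain w l where w: "w dvd 1" "y = zp_to_qp w * qp_p powi l" using qp_decomp[OF h(2)] by blast
    have vx: "qp_val x = k" using u qp_val_eq by metis
    have vy: "qp_val y = l" using w qp_val_eq by metis
    have kl: "k \<le> l" using h(4) vx vy by simp
    define z where "z = u + w * PP ^ nat (l - k)"
    have e: "qp_p powi l = qp_p powi k * (qp_p::'p qp) powi (l - k)" by (simp flip: powi_split)
    have e2: "(qp_p::'p qp) powi (l - k) = zp_to_qp (PP ^ nat (l - k))"
      using kl by (simp add: power_int_nonneg_exp iota_simps qp_p_def)
    have xy: "x + y = zp_to_qp z * qp_p powi k"
      unfolding u(2) w(2) e e2 z_def by (simp add: iota_simps algebra_simps)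
    have zn: "z \<noteq> 0" using xy h(3) by (auto simp: iota_zero)
    have vz: "qp_val (x + y) = qp_val (zp_to_qp z) + k"
      using xy qp_val_mult[of "zp_to_qp z" "qp_p powi k"] zn qp_val_pi[of k] qp_p_nonzero[where 'p='p]
      by (simp add: iota_eq_0 power_int_not_zero)
    have "qp_val x < qp_val y \<longrightarrow> z dvd 1"
    proof
      assume "qp_val x < qp_val y"
      then have "PP dvd w * PP ^ nat (l - k)" using vx vy by (simp add: dvd_power)
      moreover have "\<not> PP dvd u" using u(1) unit_iff by blast
      ultimately have "\<not> PP dvd z" unfolding z_def by (metis dvd_add_left_iff)
      then show "z dvd 1" using unit_iff by blast
    qed
    then show ?thesis using qp_val_iota[OF zn] vz vx by auto
  qed
  show ?thesis
  proof (cases "qp_val x \<le> qp_val y")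
    case True then show ?thesis using *[OF assms True] by auto
  next
    case False
    then have "qp_val y \<le> qp_val x" by simp
    then show ?thesis using *[of y x] assms by (auto simp: add.commute)
  qed
qed

lemma padic_abs_nz: "(x::'p::prime_card qp) \<noteq> 0 \<Longrightarrow> padic_abs x = real CARD('p) powi (- qp_val x)"
  by (simp add: padic_abs_def)

lemma powi_less_iff:
  assumes "(1::real) < a" shows "a powi m < a powi n \<longleftrightarrow> m < n"
  using assms power_int_strict_increasing[of m n a] power_int_strict_increasing[of n m a]
  by (metis linorder_neq_iff order_less_asym)

lemma powi_eq_iff:
  assumes "(1::real) < a" shows "a powi m = a powi n \<longleftrightarrow> m = n"
  using assms power_int_strict_increasing[of m n a] power_int_strict_increasing[of n m a]
  by (metis linorder_neq_iff order_less_irrefl)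

lemma card_real_gt1: "(1::real) < real CARD('p::prime_card)"
  using pcard_gt1[where 'p='p] by simp

lemma abs_less_iff:
  fixes x y :: "'p::prime_card qp"
  assumes "x \<noteq> 0" "y \<noteq> 0"
  shows "padic_abs x < padic_abs y \<longleftrightarrow> qp_val y < qp_val x"
  using assms powi_less_iff[OF card_real_gt1[where 'p='p]] by (simp add: padic_abs_nz)

lemma abs_eq_iff:
  fixes x y :: "'p::prime_card qp"
  assumes "x \<noteq> 0" "y \<noteq> 0"
  shows "padic_abs x = padic_abs y \<longleftrightarrow> qp_val y = qp_val x"
  using assms powi_eq_iff[OF card_real_gt1[where 'p='p]] by (auto simp: padic_abs_nz)

lemma abs_one_iff:
  fixes x :: "'p::prime_card qp"
  assumes "x \<noteq> 0"
  shows "padic_abs x = 1 \<longleftrightarrow> qp_val x = 0"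
    and "padic_abs x < 1 \<longleftrightarrow> qp_val x > 0"
    and "padic_abs x > 1 \<longleftrightarrow> qp_val x < 0"
    and "padic_abs x \<le> 1 \<longleftrightarrow> qp_val x \<ge> 0"
proof -
  have a: "(1::real) = real CARD('p) powi 0" by simp
  show "padic_abs x = 1 \<longleftrightarrow> qp_val x = 0"
    using assms powi_eq_iff[OF card_real_gt1[where 'p='p], of "- qp_val x" 0] by (simp add: padic_abs_nz)
  show "padic_abs x < 1 \<longleftrightarrow> qp_val x > 0"
    using assms powi_less_iff[OF card_real_gt1[where 'p='p], of "- qp_val x" 0] by (simp add: padic_abs_nz)
  show "padic_abs x > 1 \<longleftrightarrow> qp_val x < 0"
    using assms powi_less_iff[OF card_real_gt1[where 'p='p], of 0 "- qp_val x"] by (simp add: padic_abs_nz)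
  then show "padic_abs x \<le> 1 \<longleftrightarrow> qp_val x \<ge> 0" by linarith
qed

lemma abs_pow_less_iff:
  fixes a b :: "'p::prime_card qp"
  assumes "a \<noteq> 0" "b \<noteq> 0"
  shows "padic_abs a ^ m < padic_abs b ^ n \<longleftrightarrow> int n * qp_val b < int m * qp_val a"
proof -
  have "padic_abs a ^ m = real CARD('p) powi (- int m * qp_val a)"
    using assms by (simp add: padic_abs_nz power_int_power' mult.commute)
  moreover have "padic_abs b ^ n = real CARD('p) powi (- int n * qp_val b)"
    using assms by (simp add: padic_abs_nz power_int_power' mult.commute)
  ultimately show ?thesis using powi_less_iff[OF card_real_gt1[where 'p='p]] by simp
qed

lemma Delta1_iff:
  fixes a b :: "'p::prime_card qp"
  assumes "a \<noteq> 0" "b \<noteq> 0"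
  shows "(a, b) \<in> Delta1 \<longleftrightarrow> 2 * qp_val b < 3 * qp_val a \<and> cbrt_exists b"
  using abs_pow_less_iff[OF assms, of 3 2] by (simp add: Delta1_def)

lemma Delta3_iff:
  fixes a b :: "'p::prime_card qp"
  assumes "a \<noteq> 0" "b \<noteq> 0"
  shows "(a, b) \<in> Delta3 \<longleftrightarrow> 3 * qp_val a < 2 * qp_val b"
  using abs_pow_less_iff[OF assms(2) assms(1), of 2 3] by (simp add: Delta3_def)

lemma abs_iota_lt1:
  fixes z :: "'p::prime_card zp"
  shows "padic_abs (zp_to_qp z) < 1 \<longleftrightarrow> PP dvd z"
proof (cases "z = 0")
  case True then show ?thesis by (simp add: padic_abs_def iota_zero)
next
  case False
  then have nz: "zp_to_qp z \<noteq> 0" by (simp add: iota_eq_0)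
  have "PP dvd z \<longleftrightarrow> \<not> z dvd 1" using unit_iff by blast
  then show ?thesis using abs_one_iff(2)[OF nz] qp_val_iota[OF False] by auto
qed

lemma rep1_unit:
  fixes u :: "'p::prime_card zp"
  assumes "u dvd 1"
  shows "1 \<le> Rep_zp u 1 \<and> Rep_zp u 1 \<le> int CARD('p) - 1"
proof -
  have "\<not> PP dvd u" using assms unit_iff by blast
  then have "Rep_zp u 1 \<noteq> 0" using dvd_iff_rep[of 1 u] by simp
  then show ?thesis using rep_range[of u 1] by simp
qed

lemma digit0_eq:
  fixes u :: "'p::prime_card zp"
  assumes "u dvd 1"
  shows "qp_digit0 (zp_to_qp u * qp_p powi k) = nat (Rep_zp u 1)"
  unfolding qp_digit0_def qp_star_eq[OF assms]
proof (rule the_equality)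
  have c: "padic_abs (zp_to_qp u - of_nat d) < 1 \<longleftrightarrow> Rep_zp u 1 = int d mod int CARD('p)" for d
  proof -
    have "zp_to_qp u - of_nat d = zp_to_qp (u - of_nat d)" by (simp add: iota_simps)
    then show ?thesis using abs_iota_lt1[of "u - of_nat d"] cong_iff[of 1 u "of_nat d"]
      by (simp add: rep_of_nat)
  qed
  have r: "1 \<le> Rep_zp u 1 \<and> Rep_zp u 1 \<le> int CARD('p) - 1" by (rule rep1_unit[OF assms])
  show "nat (Rep_zp u 1) \<in> {1..CARD('p) - 1} \<and> padic_abs (zp_to_qp u - of_nat (nat (Rep_zp u 1))) < 1"
    unfolding c using r by auto
  fix d assume "d \<in> {1..CARD('p) - 1} \<and> padic_abs (zp_to_qp u - of_nat d) < 1"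
  then have "d \<ge> 1" "d < CARD('p)" "Rep_zp u 1 = int d mod int CARD('p)" unfolding c by auto
  then show "d = nat (Rep_zp u 1)" by simp
qed


definition cub :: "'p::prime_card zp \<Rightarrow> 'p zp \<Rightarrow> 'p zp \<Rightarrow> 'p zp \<Rightarrow> 'p zp" where
  "cub C A B y = C * y ^ 3 + A * y - B"

definition dcub :: "'p::prime_card zp \<Rightarrow> 'p zp \<Rightarrow> 'p zp \<Rightarrow> 'p zp" where
  "dcub C A y = 3 * C * y ^ 2 + A"

lemma cub_diff: "cub C A B x - cub C A B y = (x - y) * (C * (x^2 + x*y + y^2) + A)"
  unfolding cub_def by (simp add: algebra_simps power2_eq_square power3_eq_cube)

lemma cub_step: "cub C A B (y - w * e) = e * (1 - w * dcub C A y) + w^2 * e^2 * (3 * C * y - C * w * e) + (cub C A B y - e)"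
  unfolding cub_def dcub_def by (simp add: algebra_simps power2_eq_square power3_eq_cube)

lemma PP_dvd_diff_sq: "(PP::'p::prime_card zp) dvd (x - y) \<Longrightarrow> PP dvd (x^2 - y^2)"
proof -
  assume "PP dvd (x - y)"
  then have "PP dvd (x - y) * (x + y)" by simp
  then show ?thesis by (simp add: algebra_simps power2_eq_square)
qed

lemma hensel:
  fixes C A B y0 :: "'p::prime_card zp"
  assumes h1: "PP dvd cub C A B y0" and h2: "\<not> PP dvd dcub C A y0"
  shows "\<exists>y. cub C A B y = 0 \<and> PP dvd (y - y0)"
proof -
  have "dcub C A y0 dvd 1" using h2 unit_iff by blast
  then obtain w where w: "1 = dcub C A y0 * w" by (auto elim: dvdE)
  define f where "f = cub C A B"
  define s where "s = rec_nat y0 (\<lambda>k sk. sk - w * f sk)"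
  have s0: "s 0 = y0" and sS: "s (Suc k) = s k - w * f (s k)" for k by (simp_all add: s_def)
  have inv: "PP ^ Suc k dvd f (s k) \<and> PP dvd (s k - y0)" for k
  proof (induction k)
    case 0 then show ?case using h1 by (simp add: s0 f_def)
  next
    case (Suc k)
    define e where "e = f (s k)"
    have he: "PP ^ Suc k dvd e" "PP dvd s k - y0" using Suc unfolding e_def by auto
    have "(PP::'p zp) dvd PP ^ Suc k" by (rule dvd_power) simp
    then have hpe: "PP dvd e" using he(1) dvd_trans by blast
    have "1 - w * dcub C A (s k) = w * (dcub C A y0 - dcub C A (s k))" using w by (simp add: algebra_simps)
    moreover have "dcub C A y0 - dcub C A (s k) = 3 * C * (y0^2 - (s k)^2)" by (simp add: dcub_def algebra_simps)
    moreover have "PP dvd (y0^2 - (s k)^2)"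
      using PP_dvd_diff_sq he(2) by (metis dvd_minus_iff minus_diff_eq)
    ultimately have b1: "PP dvd 1 - w * dcub C A (s k)" by simp
    have b2: "PP dvd w^2 * e * (3 * C * s k - C * w * e)" using hpe by simp
    have "f (s (Suc k)) = e * ((1 - w * dcub C A (s k)) + w^2 * e * (3 * C * s k - C * w * e))"
      unfolding sS e_def f_def cub_step[of C A B "s k" w "cub C A B (s k)"] by (simp add: algebra_simps power2_eq_square)
    moreover have "PP ^ Suc k * PP dvd e * ((1 - w * dcub C A (s k)) + w^2 * e * (3 * C * s k - C * w * e))"
      using mult_dvd_mono[OF he(1) dvd_add[OF b1 b2]] .
    moreover have "PP ^ Suc (Suc k) = PP ^ Suc k * (PP::'p zp)" by (rule power_Suc2)
    ultimately have c1: "PP ^ Suc (Suc k) dvd f (s (Suc k))" by metis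
    have eq: "s (Suc k) - y0 = (s k - y0) - w * e" by (simp add: sS e_def)
    have c2: "PP dvd s (Suc k) - y0" unfolding eq by (rule dvd_diff[OF he(2) dvd_mult[OF hpe, of w]])
    show ?case using c1 c2 by simp
  qed
  have "PP ^ k dvd (s (Suc k) - s k)" for k
  proof -
    have "s (Suc k) - s k = - (w * f (s k))" by (simp add: sS)
    moreover have "PP ^ k dvd f (s k)" using inv[of k] by (metis dvd_mult_left power_Suc2)
    ultimately show ?thesis by simp
  qed
  then obtain L where L: "\<And>k. PP ^ k dvd (L - s k)" using zp_limit by blast
  have "PP ^ k dvd f L" for k
  proof -
    have "f L - f (s k) = (L - s k) * (C * (L^2 + L * s k + (s k)^2) + A)" unfolding f_def by (rule cub_diff)
    then have "PP ^ k dvd f L - f (s k)" using L[of k] by simp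
    moreover have "PP ^ k dvd f (s k)" using inv[of k] by (metis dvd_mult_left power_Suc2)
    ultimately have "PP ^ k dvd (f L - f (s k)) + f (s k)" by (rule dvd_add)
    then show ?thesis by simp
  qed
  then have "f L = 0" using zero_iff by blast
  moreover have "PP dvd L - y0"
  proof -
    have "PP dvd L - s 1" using L[of 1] by simp
    moreover have "PP dvd s 1 - y0" using inv[of 1] by simp
    ultimately have "PP dvd (L - s 1) + (s 1 - y0)" by (rule dvd_add)
    then show ?thesis by simp
  qed
  ultimately show ?thesis unfolding f_def by blast
qed

lemma hensel_unique:
  fixes C A B r s :: "'p::prime_card zp"
  assumes "cub C A B r = 0" "cub C A B s = 0" "PP dvd (r - s)" "\<not> PP dvd dcub C A r"
  shows "r = s"
proof -
  have z: "(r - s) * (C * (r^2 + r*s + s^2) + A) = 0" using cub_diff[of C A B r s] assms(1,2) by simp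
  define X where "X = C * (r^2 + r*s + s^2) + A"
  have e: "X - dcub C A r = - ((r - s) * (C * (s + 2 * r)))"
    by (simp add: X_def dcub_def algebra_simps power2_eq_square)
  have "PP dvd (r - s) * (C * (s + 2 * r))" using assms(3) by (rule dvd_mult2)
  then have "PP dvd - ((r - s) * (C * (s + 2 * r)))" by (simp only: dvd_minus_iff)
  then have d1: "PP dvd X - dcub C A r" unfolding e .
  have "\<not> PP dvd X"
  proof
    assume "PP dvd X"
    then have "PP dvd X - (X - dcub C A r)" using d1 by (rule dvd_diff)
    then show False using assms(4) by simp
  qed
  then have "X \<noteq> 0" by auto
  then show ?thesis using z unfolding X_def by simp
qed

lemma PP_dvd_of_int: "(PP::'p::prime_card zp) dvd of_int m \<longleftrightarrow> int CARD('p) dvd m"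
  using dvd_iff_rep[of 1 "of_int m :: 'p zp"] by (simp add: rep_of_int dvd_eq_mod_eq_0)

lemma zp_res:
  fixes y :: "'p::prime_card zp"
  shows "PP dvd (y - of_int (Rep_zp y 1))"
proof -
  have "Rep_zp (of_int (Rep_zp y 1) :: 'p zp) 1 = Rep_zp y 1"
    using rep_mod[of y 1] by (simp add: rep_of_int)
  then show ?thesis using cong_iff[of 1 y] by simp
qed

lemma zp_res_range: "0 \<le> Rep_zp (y::'p::prime_card zp) 1 \<and> Rep_zp y 1 < int CARD('p)"
  using rep_range[of y 1] by simp

lemma PP_dvd_iff_rep1: "(PP::'p::prime_card zp) dvd y \<longleftrightarrow> Rep_zp y 1 = 0"
  using dvd_iff_rep[of 1 y] by simp


lemma nt_gen:
  fixes p :: nat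
  assumes "prime p"
  obtains g where "ord p g = p - 1" "coprime p g"
    "\<And>d. 0 < d \<Longrightarrow> d < p \<Longrightarrow> \<exists>i. [g ^ i = d] (mod p)"
proof -
  have p1: "p > 1" using assms prime_gt_1_nat by blast
  obtain g where g: "residue_primroot p g" using prime_primitive_root_exists[OF p1 assms] by blast
  have bij: "bij_betw (\<lambda>i. g ^ i mod p) {..<totient p} (totatives p)"
    by (rule residue_primroot_is_generator[OF p1 g])
  have o: "ord p g = p - 1" "coprime p g" using g assms by (auto simp: residue_primroot_def totient_prime)
  have "\<exists>i. [g ^ i = d] (mod p)" if "0 < d" "d < p" for d
  proof -
    have "coprime d p" using assms that by (metis prime_imp_coprime_nat coprime_commute dvd_imp_le not_less)
    then have "d \<in> totatives p" using that by (auto simp: totatives_def)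
    then obtain i where "d = g ^ i mod p" using bij unfolding bij_betw_def by auto
    then show ?thesis by (auto simp: cong_def)
  qed
  then show ?thesis using that o by blast
qed

lemma nt_root:
  fixes p k d :: nat
  assumes "prime p" "k > 0" "k dvd p - 1" "0 < d" "d < p" "d ^ ((p - 1) div k) mod p = 1"
  shows "\<exists>c. [c ^ k = d] (mod p)"
proof -
  obtain g where g: "ord p g = p - 1" "coprime p g" "\<And>d. 0 < d \<Longrightarrow> d < p \<Longrightarrow> \<exists>i. [g ^ i = d] (mod p)"
    using nt_gen[OF assms(1)] by blast
  obtain i where i: "[g ^ i = d] (mod p)" using g(3) assms(4,5) by blast
  obtain q where q: "p - 1 = k * q" using assms(3) by auto
  have p1: "p > 1" using assms(1) prime_gt_1_nat by blast
  then have qpos: "q > 0" using q by (cases q) auto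
  have "[d ^ q = 1] (mod p)" using assms(6) q assms(2) p1 by (simp add: cong_def)
  moreover have "[g ^ (i * q) = d ^ q] (mod p)" using cong_pow[OF i, of q] by (simp add: power_mult)
  ultimately have "[g ^ (i * q) = 1] (mod p)" using cong_trans by blast
  then have "ord p g dvd i * q" using ord_divides by blast
  then have "k * q dvd i * q" using g(1) q by simp
  then have "k dvd i" using qpos by simp
  then obtain j where j: "i = k * j" by auto
  have "[(g ^ j) ^ k = d] (mod p)" using i j by (simp add: power_mult[symmetric] mult.commute)
  then show ?thesis by blast
qed

lemma nt_omega:
  fixes p :: nat
  assumes "prime p" "p mod 3 = 1"
  shows "\<exists>w. [w ^ 3 = 1] (mod p) \<and> \<not> [w = 1] (mod p)"
proof -
  obtain g where g: "ord p g = p - 1" "coprime p g" using nt_gen[OF assms(1)] by blast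
  have p1: "p > 1" using assms(1) prime_gt_1_nat by blast
  have "3 dvd p - 1" using assms(2) p1 by presburger
  then obtain q where q: "p - 1 = 3 * q" by auto
  have qpos: "q > 0" using q p1 by (cases q) auto
  have "[g ^ (p - 1) = 1] (mod p)" using g(1) ord_divides[of g "p - 1" p] by auto
  then have c1: "[(g ^ q) ^ 3 = 1] (mod p)" using q by (simp add: power_mult[symmetric] mult.commute)
  have "\<not> [g ^ q = 1] (mod p)"
  proof
    assume "[g ^ q = 1] (mod p)"
    then have "ord p g dvd q" using ord_divides by blast
    then have "p - 1 dvd q" using g(1) by simp
    then have "3 * q \<le> q" using q qpos by (metis dvd_imp_le)
    then show False using qpos by simp
  qed
  then show ?thesis using c1 by blast
qed

lemma nt_inj2:
  fixes p r s :: nat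
  assumes "prime p" "p mod 3 = 2" "[r ^ 3 = s ^ 3] (mod p)" "\<not> p dvd s"
  shows "[r = s] (mod p)"
proof -
  have p1: "p > 1" using assms(1) prime_gt_1_nat by blast
  have "p - 1 = 3 * ((p - 2) div 3) + 1" using assms(2) p1 by presburger
  then obtain q where q: "p - 1 = 3 * q + 1" by blast
  have ps3: "\<not> p dvd s ^ 3" using assms(1,4) prime_dvd_power by blast
  have "\<not> p dvd r"
  proof
    assume "p dvd r"
    then have "p dvd r ^ 3" using dvd_trans[of p r "r^3"] by simp
    then have "p dvd s ^ 3" using assms(3) by (metis cong_dvd_iff)
    then show False using ps3 by blast
  qed
  then have fr: "[r ^ (p - 1) = 1] (mod p)" using fermat_theorem[OF assms(1)] by blast
  have fs: "[s ^ (p - 1) = 1] (mod p)" using fermat_theorem[OF assms(1) assms(4)] .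
  have er: "r ^ (p - 1) = (r ^ 3) ^ q * r" using q by (simp add: power_mult[symmetric] power_add)
  have es: "s ^ (p - 1) = (s ^ 3) ^ q * s" using q by (simp add: power_mult[symmetric] power_add)
  have "[(r ^ 3) ^ q * r = (s ^ 3) ^ q * r] (mod p)" using cong_pow[OF assms(3), of q] by (rule cong_mult) simp
  moreover have "[(r ^ 3) ^ q * r = (s ^ 3) ^ q * s] (mod p)" using fr fs er es by (metis cong_sym cong_trans)
  ultimately have "[(s ^ 3) ^ q * r = (s ^ 3) ^ q * s] (mod p)" by (metis cong_sym cong_trans)
  moreover have "coprime ((s ^ 3) ^ q) p"
    using ps3 assms(1) by (metis coprime_commute coprime_power_left_iff prime_imp_coprime_nat)
  ultimately show ?thesis using cong_mult_lcancel_nat by blast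
qed

lemma nt_cube2:
  fixes p d :: nat
  assumes "prime p" "p mod 3 = 2" "\<not> p dvd d"
  shows "\<exists>c. [c ^ 3 = d] (mod p)"
proof -
  have p1: "p > 1" using assms(1) prime_gt_1_nat by blast
  have "p - 1 = 3 * ((p - 2) div 3) + 1" using assms(2) p1 by presburger
  then obtain q where q: "p - 1 = 3 * q + 1" by blast
  have f: "[d ^ (p - 1) = 1] (mod p)" using fermat_theorem[OF assms(1) assms(3)] .
  have e1: "(d ^ (2 * q + 1)) ^ 3 = d ^ ((2 * q + 1) * 3)" by (rule power_mult[symmetric])
  have e2: "(d ^ (p - 1)) ^ 2 * d = d ^ ((p - 1) * 2 + 1)" by (simp only: power_add power_mult power_one_right)
  have eq: "(2 * q + 1) * 3 = (p - 1) * 2 + 1" using q by simp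
  have "(d ^ (2 * q + 1)) ^ 3 = (d ^ (p - 1)) ^ 2 * d" unfolding e1 e2 eq ..
  moreover have "[(d ^ (p - 1)) ^ 2 * d = 1 ^ 2 * d] (mod p)" using cong_pow[OF f, of 2] by (rule cong_mult) simp
  ultimately have "[(d ^ (2 * q + 1)) ^ 3 = d] (mod p)" by simp
  then show ?thesis by blast
qed

lemma nt_fermat_sq:
  fixes p c d :: nat
  assumes "prime p" "odd p" "[c ^ 2 = d] (mod p)" "\<not> p dvd d"
  shows "d ^ ((p - 1) div 2) mod p = 1"
proof -
  have "\<not> p dvd c"
  proof
    assume "p dvd c" then have "p dvd c ^ 2" using dvd_trans[of p c "c^2"] by simp
    then show False using assms(3,4) by (metis cong_dvd_iff)
  qed
  then have f: "[c ^ (p - 1) = 1] (mod p)" using fermat_theorem[OF assms(1)] by blast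
  have "p - 1 = 2 * ((p - 1) div 2)" using assms(2) by presburger
  then have "c ^ (p - 1) = (c ^ 2) ^ ((p - 1) div 2)" by (metis power_mult)
  then have "[d ^ ((p - 1) div 2) = 1] (mod p)"
    using f cong_pow[OF assms(3), of "(p - 1) div 2"] by (metis cong_sym cong_trans)
  moreover have "p > 1" using assms(1) prime_gt_1_nat by blast
  ultimately show ?thesis by (simp add: cong_def)
qed


definition pc :: "'p::prime_card zp \<Rightarrow> 'p zp \<Rightarrow> bool" where
  "pc x y \<longleftrightarrow> PP dvd (x - y)"

definition res :: "'p::prime_card zp \<Rightarrow> nat" where
  "res y = nat (Rep_zp y 1)"

lemma pc_refl: "pc x x" by (simp add: pc_def)
lemma pc_sym: "pc x y \<Longrightarrow> pc y x"
proof -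
  assume "pc x y"
  then have "PP dvd - (x - y)" unfolding pc_def by (simp only: dvd_minus_iff)
  then show ?thesis unfolding pc_def by simp
qed
lemma pc_trans: "pc x y \<Longrightarrow> pc y z \<Longrightarrow> pc x z"
proof -
  assume "pc x y" "pc y z"
  then have "PP dvd (x - y) + (y - z)" unfolding pc_def by (rule dvd_add)
  then show ?thesis unfolding pc_def by simp
qed
lemma pc_add: "pc x x' \<Longrightarrow> pc y y' \<Longrightarrow> pc (x + y) (x' + y')"
proof -
  assume "pc x x'" "pc y y'"
  then have "PP dvd (x - x') + (y - y')" unfolding pc_def by (rule dvd_add)
  then show ?thesis unfolding pc_def by (simp add: algebra_simps)
qed
lemma pc_minus: "pc x x' \<Longrightarrow> pc (- x) (- x')"
proof -
  assume "pc x x'"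
  then have "PP dvd - (x - x')" unfolding pc_def by (simp only: dvd_minus_iff)
  then show ?thesis unfolding pc_def by simp
qed
lemma pc_diff: "pc x x' \<Longrightarrow> pc y y' \<Longrightarrow> pc (x - y) (x' - y')"
  using pc_add[of x x' "-y" "-y'"] pc_minus[of y y'] by simp
lemma pc_mult: "pc x x' \<Longrightarrow> pc y y' \<Longrightarrow> pc (x * y) (x' * y')"
proof -
  assume a: "pc x x'" "pc y y'"
  have "PP dvd (x - x') * y" using a(1) unfolding pc_def by simp
  moreover have "PP dvd x' * (y - y')" using a(2) unfolding pc_def by simp
  ultimately have "PP dvd (x - x') * y + x' * (y - y')" by (rule dvd_add)
  then show ?thesis unfolding pc_def by (simp add: algebra_simps)
qed
lemma pc_pow: "pc x x' \<Longrightarrow> pc (x ^ k) (x' ^ k)"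
  by (induction k) (simp_all add: pc_refl pc_mult)

lemma pc_zero: "pc x 0 \<longleftrightarrow> PP dvd x" by (simp add: pc_def)

lemma pc_dvd:
  assumes "pc x y" shows "PP dvd x \<longleftrightarrow> PP dvd y"
proof
  assume "PP dvd x"
  then have "PP dvd x - (x - y)" using assms unfolding pc_def by (rule dvd_diff)
  then show "PP dvd y" by simp
next
  assume "PP dvd y"
  then have "PP dvd (x - y) + y" using assms unfolding pc_def by (intro dvd_add)
  then show "PP dvd x" by simp
qed

lemma res_lt: "res (y::'p::prime_card zp) < CARD('p)"
  using zp_res_range[of y] unfolding res_def by linarith

lemma rep_res: "Rep_zp (y::'p::prime_card zp) 1 = int (res y)"
  using zp_res_range[of y] unfolding res_def by simp

lemma pc_res: "pc (y::'p::prime_card zp) (of_nat (res y))"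
proof -
  have "(of_int (Rep_zp y 1) :: 'p zp) = of_int (int (res y))" by (simp only: rep_res)
  then show ?thesis using zp_res[of y] unfolding pc_def by simp
qed

lemma pc_of_nat: "pc (of_nat m :: 'p::prime_card zp) (of_nat n) \<longleftrightarrow> [m = n] (mod CARD('p))"
proof -
  have "pc (of_nat m :: 'p zp) (of_nat n) \<longleftrightarrow> int m mod int CARD('p) = int n mod int CARD('p)"
    unfolding pc_def using cong_iff[of 1 "of_nat m :: 'p zp" "of_nat n"] by (simp add: rep_of_nat)
  also have "\<dots> \<longleftrightarrow> [m = n] (mod CARD('p))"
    by (simp add: cong_def flip: of_nat_mod)
  finally show ?thesis .
qed

lemma pc_res_iff: "pc (of_nat m :: 'p::prime_card zp) y \<longleftrightarrow> [m = res y] (mod CARD('p))"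
proof -
  have "pc (of_nat m :: 'p zp) y \<longleftrightarrow> pc (of_nat m) (of_nat (res y) :: 'p zp)"
  proof
    assume "pc (of_nat m :: 'p zp) y"
    then show "pc (of_nat m) (of_nat (res y) :: 'p zp)" using pc_res[of y] by (rule pc_trans)
  next
    assume "pc (of_nat m :: 'p zp) (of_nat (res y) :: 'p zp)"
    then show "pc (of_nat m) y" using pc_sym[OF pc_res[of y]] by (rule pc_trans)
  qed
  then show ?thesis by (simp add: pc_of_nat)
qed

lemma PP_dvd_of_nat: "(PP::'p::prime_card zp) dvd of_nat m \<longleftrightarrow> CARD('p) dvd m"
  using pc_of_nat[of m 0, where 'p='p] by (simp add: pc_zero cong_0_iff)

lemma PP_dvd_res: "(PP::'p::prime_card zp) dvd y \<longleftrightarrow> res y = 0"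
  using PP_dvd_iff_rep1[of y] rep_res[of y] by simp

lemma not_PP_dvd_3: "CARD('p::prime_card) > 3 \<Longrightarrow> \<not> (PP::'p zp) dvd 3"
  using PP_dvd_of_nat[of 3, where 'p='p] by (auto dest: dvd_imp_le)

lemma not_PP_dvd_2: "CARD('p::prime_card) > 3 \<Longrightarrow> \<not> (PP::'p zp) dvd 2"
  using PP_dvd_of_nat[of 2, where 'p='p] by (auto dest: dvd_imp_le)

lemma PP_dvd_power: "(PP::'p::prime_card zp) dvd x ^ k \<Longrightarrow> k > 0 \<Longrightarrow> PP dvd x"
proof (induction k)
  case 0 then show ?case by simp
next
  case (Suc k)
  then show ?case using PP_prime[of x "x ^ k"] by (cases "k = 0") auto
qed

lemma unit_mult_PP: "(u::'p::prime_card zp) dvd 1 \<Longrightarrow> PP dvd u * x \<Longrightarrow> PP dvd x"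
  using PP_prime unit_iff by blast

lemma prime_card_nat: "prime (CARD('p::prime_card))" by (rule prime_card)


definition uroots :: "'p::prime_card zp \<Rightarrow> 'p zp \<Rightarrow> 'p zp \<Rightarrow> 'p zp set" where
  "uroots C A B = {y. y dvd 1 \<and> cub C A B y = 0}"

lemma unit_not_PP: "(u::'p::prime_card zp) dvd 1 \<longleftrightarrow> \<not> PP dvd u" by (rule unit_iff)

lemma PP_dvd_sq: "(PP::'p::prime_card zp) dvd y ^ 2 \<Longrightarrow> PP dvd y"
  using PP_dvd_power[of y 2] by simp

lemma dcub1_nz:
  fixes y A :: "'p::prime_card zp"
  assumes "CARD('p) > 3" "\<not> PP dvd y" "PP dvd A"
  shows "\<not> PP dvd dcub 1 A y"
proof
  assume "PP dvd dcub 1 A y"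
  then have "PP dvd dcub 1 A y - A" using assms(3) by (rule dvd_diff)
  then have "PP dvd 3 * y ^ 2" by (simp add: dcub_def)
  then have "PP dvd (3::'p zp) \<or> PP dvd y ^ 2" by (rule PP_prime)
  then show False using not_PP_dvd_3[OF assms(1)] PP_dvd_sq assms(2) by blast
qed

lemma S1_exist:
  fixes A ub :: "'p::prime_card zp"
  assumes p3: "CARD('p) > 3" and hA: "PP dvd A" and hu: "ub dvd 1" and hc: "[c ^ 3 = res ub] (mod CARD('p))"
  shows "\<exists>r. r \<in> uroots 1 A ub \<and> pc r (of_nat c)"
proof -
  define y0 where "y0 = (of_nat c :: 'p zp)"
  have "pc (of_nat (c ^ 3) :: 'p zp) ub" using hc by (simp only: pc_res_iff)
  then have c3: "pc (y0 ^ 3) ub" by (simp add: y0_def)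
  have nu: "\<not> PP dvd ub" using hu unit_iff by blast
  have ny: "\<not> PP dvd y0"
  proof
    assume "PP dvd y0"
    then have "PP dvd y0 ^ 3" by (simp add: dvd_mult2 power3_eq_cube)
    then show False using pc_dvd[OF c3] nu by blast
  qed
  have "cub 1 A ub y0 = (y0 ^ 3 - ub) + A * y0" by (simp add: cub_def)
  moreover have "PP dvd (y0 ^ 3 - ub) + A * y0" using c3 hA unfolding pc_def by (intro dvd_add) simp_all
  ultimately have h1: "PP dvd cub 1 A ub y0" by simp
  have h2: "\<not> PP dvd dcub 1 A y0" by (rule dcub1_nz[OF p3 ny hA])
  obtain r where r: "cub 1 A ub r = 0" "PP dvd r - y0" using hensel[OF h1 h2] by blast
  have "pc r y0" using r(2) by (simp add: pc_def)
  then have "\<not> PP dvd r" using pc_dvd ny by blast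
  then have "r dvd 1" using unit_iff by blast
  then show ?thesis using r(1) \<open>pc r y0\<close> by (auto simp: uroots_def y0_def)
qed

lemma S1_cube:
  fixes A ub y :: "'p::prime_card zp"
  assumes "PP dvd A" "cub 1 A ub y = 0"
  shows "pc (y ^ 3) ub"
proof -
  have "y ^ 3 - ub = - (A * y)" using assms(2) by (simp add: cub_def algebra_simps)
  then show ?thesis using assms(1) unfolding pc_def by simp
qed

lemma res_unit: "(u::'p::prime_card zp) dvd 1 \<Longrightarrow> 0 < res u \<and> res u < CARD('p)"
  using PP_dvd_res[of u] unit_iff[of u] res_lt[of u] by auto

lemma S1_p2:
  fixes A ub :: "'p::prime_card zp"
  assumes p3: "CARD('p) > 3" and p2: "CARD('p) mod 3 = 2" and hA: "PP dvd A" and hu: "ub dvd 1"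
  shows "\<exists>r. uroots 1 A ub = {r}"
proof -
  have pr: "prime (CARD('p))" by (rule prime_card)
  have d: "0 < res ub" "res ub < CARD('p)" using res_unit[OF hu] by auto
  have "\<not> CARD('p) dvd res ub" using d by (auto dest: dvd_imp_le)
  then obtain c where c: "[c ^ 3 = res ub] (mod CARD('p))" using nt_cube2[OF pr p2] by blast
  obtain r where r: "r \<in> uroots 1 A ub" using S1_exist[OF p3 hA hu c] by blast
  have "y = r" if y: "y \<in> uroots 1 A ub" for y
  proof -
    have yu: "y dvd 1" "cub 1 A ub y = 0" using y by (auto simp: uroots_def)
    have ru: "r dvd 1" "cub 1 A ub r = 0" using r by (auto simp: uroots_def)
    have "pc (y ^ 3) (r ^ 3)" using S1_cube[OF hA yu(2)] pc_sym[OF S1_cube[OF hA ru(2)]] by (rule pc_trans)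
    moreover have "pc ((of_nat (res y)) ^ 3) (y ^ 3)" using pc_pow[OF pc_sym[OF pc_res[of y]]] .
    moreover have "pc (r ^ 3) ((of_nat (res r)) ^ 3)" using pc_pow[OF pc_res[of r]] .
    ultimately have "pc ((of_nat (res y)) ^ 3) ((of_nat (res r)) ^ 3 :: 'p zp)" using pc_trans by metis
    then have "pc (of_nat (res y ^ 3)) (of_nat (res r ^ 3) :: 'p zp)" by simp
    then have "[res y ^ 3 = res r ^ 3] (mod CARD('p))" by (simp only: pc_of_nat)
    moreover have "\<not> CARD('p) dvd res r" using res_unit[OF ru(1)] by (auto dest: dvd_imp_le)
    ultimately have "[res y = res r] (mod CARD('p))" using nt_inj2[OF pr p2] by blast
    then have "pc (of_nat (res y)) (of_nat (res r) :: 'p zp)" by (simp only: pc_of_nat)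
    then have "pc y r" using pc_res[of y] pc_sym[OF pc_res[of r]] pc_trans by metis
    moreover have "\<not> PP dvd dcub 1 A y" using dcub1_nz[OF p3 _ hA] yu(1) unit_iff by blast
    ultimately show "y = r" using hensel_unique[OF yu(2) ru(2)] unfolding pc_def by blast
  qed
  then show ?thesis using r by blast
qed


lemma pc_hensel_eq:
  fixes A ub y r :: "'p::prime_card zp"
  assumes p3: "CARD('p) > 3" and hA: "PP dvd A"
    and y: "y \<in> uroots 1 A ub" and r: "r \<in> uroots 1 A ub" and "pc y r"
  shows "y = r"
proof -
  have yu: "y dvd 1" "cub 1 A ub y = 0" using y by (auto simp: uroots_def)
  have ru: "cub 1 A ub r = 0" using r by (auto simp: uroots_def)
  have "\<not> PP dvd dcub 1 A y" using dcub1_nz[OF p3 _ hA] yu(1) unit_iff by blast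
  then show "y = r" using hensel_unique[OF yu(2) ru] assms(5) unfolding pc_def by blast
qed

lemma S1_p1:
  fixes A ub :: "'p::prime_card zp"
  assumes p3: "CARD('p) > 3" and p1: "CARD('p) mod 3 = 1" and hA: "PP dvd A" and hu: "ub dvd 1"
    and hd: "res ub ^ ((CARD('p) - 1) div 3) mod CARD('p) = 1"
  shows "\<exists>r1 r2 r3. r1 \<noteq> r2 \<and> r1 \<noteq> r3 \<and> r2 \<noteq> r3 \<and> uroots 1 A ub = {r1, r2, r3}"
proof -
  define pn where "pn = CARD('p)"
  have pr: "prime pn" unfolding pn_def by (rule prime_card)
  have d: "0 < res ub" "res ub < pn" using res_unit[OF hu] pn_def by auto
  have h3: "3 dvd pn - 1" using p1 pn_def by presburger
  have hd': "res ub ^ ((pn - 1) div 3) mod pn = 1" using hd pn_def by simp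
  have "\<exists>c. [c ^ 3 = res ub] (mod pn)" by (rule nt_root[OF pr _ h3 d(1) d(2) hd']) simp
  then obtain c where c: "[c ^ 3 = res ub] (mod pn)" by blast
  obtain w where w: "[w ^ 3 = 1] (mod pn)" "\<not> [w = 1] (mod pn)" using nt_omega[OF pr] p1 pn_def by blast
  have cw: "[(c * w) ^ 3 = res ub] (mod pn)"
  proof -
    have "[c ^ 3 * w ^ 3 = res ub * 1] (mod pn)" using c w(1) by (rule cong_mult)
    then show ?thesis by (simp add: power_mult_distrib)
  qed
  have cw2: "[(c * w ^ 2) ^ 3 = res ub] (mod pn)"
  proof -
    have "[(w ^ 3) ^ 2 = 1 ^ 2] (mod pn)" using w(1) by (rule cong_pow)
    then have "[c ^ 3 * (w ^ 3) ^ 2 = res ub * 1] (mod pn)" using c by (intro cong_mult) simp_all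
    moreover have "(c * w ^ 2) ^ 3 = c ^ 3 * (w ^ 3) ^ 2" by (simp add: power_mult_distrib power_mult[symmetric] mult.commute)
    ultimately show ?thesis by simp
  qed
  obtain r1 where r1: "r1 \<in> uroots 1 A ub" "pc r1 (of_nat c)" using S1_exist[OF p3 hA hu c[unfolded pn_def]] by blast
  obtain r2 where r2: "r2 \<in> uroots 1 A ub" "pc r2 (of_nat (c * w))" using S1_exist[OF p3 hA hu cw[unfolded pn_def]] by blast
  obtain r3 where r3: "r3 \<in> uroots 1 A ub" "pc r3 (of_nat (c * w ^ 2))" using S1_exist[OF p3 hA hu cw2[unfolded pn_def]] by blast
  have cop_c: "coprime c pn"
  proof -
    have "\<not> pn dvd c"
    proof
      assume "pn dvd c"
      then have "pn dvd c ^ 3" by (simp add: dvd_mult2 power3_eq_cube)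
      then have "pn dvd res ub" using c by (metis cong_dvd_iff)
      then show False using d by (auto dest: dvd_imp_le)
    qed
    then show ?thesis using pr by (metis coprime_commute prime_imp_coprime_nat)
  qed
  have cop_w: "coprime w pn"
  proof -
    have "\<not> pn dvd w"
    proof
      assume "pn dvd w"
      then have "pn dvd w ^ 3" by (simp add: dvd_mult2 power3_eq_cube)
      then have "pn dvd 1" using w(1) by (metis cong_dvd_iff)
      then show False using pr by (simp add: prime_gt_1_nat)
    qed
    then show ?thesis using pr by (metis coprime_commute prime_imp_coprime_nat)
  qed
  have w2: "\<not> [w ^ 2 = 1] (mod pn)"
  proof
    assume "[w ^ 2 = 1] (mod pn)"
    then have "[w * w ^ 2 = w * 1] (mod pn)" by (intro cong_mult) simp_all
    then have "[w ^ 3 = w] (mod pn)" by (simp add: power3_eq_cube power2_eq_square mult.assoc)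
    then have "[w = 1] (mod pn)" using w(1) by (metis cong_sym cong_trans)
    then show False using w(2) by blast
  qed
  have neq: "\<not> pc (of_nat a) (of_nat b :: 'p zp)" if "\<not> [a = b] (mod pn)" for a b
    using that pn_def by (simp add: pc_of_nat)
  have n12: "\<not> [c = c * w] (mod pn)"
  proof
    assume "[c = c * w] (mod pn)"
    then have "[c * 1 = c * w] (mod pn)" by simp
    then have "[1 = w] (mod pn)" using cong_mult_lcancel_nat[OF cop_c] by blast
    then show False using w(2) cong_sym by blast
  qed
  have n13: "\<not> [c = c * w ^ 2] (mod pn)"
  proof
    assume "[c = c * w ^ 2] (mod pn)"
    then have "[c * 1 = c * w ^ 2] (mod pn)" by simp
    then have "[1 = w ^ 2] (mod pn)" using cong_mult_lcancel_nat[OF cop_c] by blast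
    then show False using w2 cong_sym by blast
  qed
  have n23: "\<not> [c * w = c * w ^ 2] (mod pn)"
  proof
    assume "[c * w = c * w ^ 2] (mod pn)"
    then have "[(c * w) * 1 = (c * w) * w] (mod pn)" by (simp add: power2_eq_square mult.assoc)
    moreover have "coprime (c * w) pn" using cop_c cop_w by simp
    ultimately have "[1 = w] (mod pn)" using cong_mult_lcancel_nat by blast
    then show False using w(2) cong_sym by blast
  qed
  have d12: "r1 \<noteq> r2"
  proof
    assume "r1 = r2"
    then have "pc (of_nat c) (of_nat (c * w) :: 'p zp)" using r1(2) r2(2) pc_sym pc_trans by metis
    then show False using neq n12 by blast
  qed
  have d13: "r1 \<noteq> r3"
  proof
    assume "r1 = r3"
    then have "pc (of_nat c) (of_nat (c * w ^ 2) :: 'p zp)" using r1(2) r3(2) pc_sym pc_trans by metis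
    then show False using neq n13 by blast
  qed
  have d23: "r2 \<noteq> r3"
  proof
    assume "r2 = r3"
    then have "pc (of_nat (c * w)) (of_nat (c * w ^ 2) :: 'p zp)" using r2(2) r3(2) pc_sym pc_trans by metis
    then show False using neq n23 by blast
  qed
  define C where "C = (of_nat c :: 'p zp)"
  define W where "W = (of_nat w :: 'p zp)"
  have W3: "pc (W ^ 3) 1"
  proof -
    have "pc (of_nat (w ^ 3)) (of_nat 1 :: 'p zp)" using w(1) pn_def by (simp only: pc_of_nat)
    then show ?thesis by (simp add: W_def)
  qed
  have W1: "\<not> PP dvd (W - 1)"
  proof
    assume "PP dvd (W - 1)"
    then have "pc (of_nat w) (of_nat 1 :: 'p zp)" by (simp add: pc_def W_def)
    then show False using w(2) neq by blast
  qed
  have Ws: "PP dvd (1 + W + W ^ 2)"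
  proof -
    have "(W - 1) * (1 + W + W ^ 2) = W ^ 3 - 1" by (simp add: algebra_simps power2_eq_square power3_eq_cube)
    then have "PP dvd (W - 1) * (1 + W + W ^ 2)" using W3 by (simp add: pc_def)
    then show ?thesis using PP_prime W1 by blast
  qed
  have C3: "pc (C ^ 3) ub"
  proof -
    have "pc (of_nat (c ^ 3) :: 'p zp) ub" using c pn_def by (simp only: pc_res_iff)
    then show ?thesis by (simp add: C_def)
  qed
  have all: "y = r1 \<or> y = r2 \<or> y = r3" if y: "y \<in> uroots 1 A ub" for y
  proof -
    have yy: "cub 1 A ub y = 0" using y by (simp add: uroots_def)
    have "pc (y ^ 3) (C ^ 3)" using S1_cube[OF hA yy] pc_sym[OF C3] by (rule pc_trans)
    then have e1: "PP dvd y ^ 3 - C ^ 3" by (simp add: pc_def)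
    have e2: "y ^ 3 - C ^ 3 - (y - C) * (y - C * W) * (y - C * W ^ 2)
        = (1 + W + W ^ 2) * (C * y ^ 2 - C ^ 2 * W * y) + C ^ 3 * (W ^ 3 - 1)"
      by (simp add: algebra_simps power2_eq_square power3_eq_cube)
    have "PP dvd (1 + W + W ^ 2) * (C * y ^ 2 - C ^ 2 * W * y) + C ^ 3 * (W ^ 3 - 1)"
      using Ws W3 unfolding pc_def by (intro dvd_add) simp_all
    then have "PP dvd y ^ 3 - C ^ 3 - (y - C) * (y - C * W) * (y - C * W ^ 2)" using e2 by simp
    then have "PP dvd (y ^ 3 - C ^ 3) - (y ^ 3 - C ^ 3 - (y - C) * (y - C * W) * (y - C * W ^ 2))"
      by (rule dvd_diff[OF e1])
    then have "PP dvd (y - C) * (y - C * W) * (y - C * W ^ 2)" by simp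
    then have "PP dvd y - C \<or> PP dvd y - C * W \<or> PP dvd y - C * W ^ 2" using PP_prime by blast
    then have "pc y (of_nat c) \<or> pc y (of_nat (c * w)) \<or> pc y (of_nat (c * w ^ 2))"
      by (simp add: pc_def C_def W_def)
    then show ?thesis
      using pc_hensel_eq[OF p3 hA y] r1 r2 r3 pc_sym pc_trans by metis
  qed
  have "uroots 1 A ub = {r1, r2, r3}" using all r1(1) r2(1) r3(1) by blast
  then show ?thesis using d12 d13 d23 by blast
qed


lemma S2:
  fixes C ua ub :: "'p::prime_card zp"
  assumes hC: "PP dvd C" and ha: "ua dvd 1" and hb: "ub dvd 1"
  shows "\<exists>r. uroots C ua ub = {r}"
proof -
  obtain ua' where ua': "1 = ua * ua'" using ha by (auto elim: dvdE)
  have ua'u: "ua' dvd 1" using ua' by (metis dvd_triv_right)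
  define y0 where "y0 = ub * ua'"
  have y0u: "y0 dvd 1" unfolding y0_def using mult_dvd_mono[OF hb ua'u] by simp
  have "cub C ua ub y0 = C * y0 ^ 3"
  proof -
    have "ua * y0 = ub" unfolding y0_def using ua' by (metis mult.commute mult.left_commute mult_1_right)
    then show ?thesis by (simp add: cub_def)
  qed
  then have h1: "PP dvd cub C ua ub y0" using hC by simp
  have nua: "\<not> PP dvd ua" using ha unit_iff by blast
  have h2: "\<not> PP dvd dcub C ua y0"
  proof
    assume "PP dvd dcub C ua y0"
    moreover have "PP dvd 3 * C * y0 ^ 2" using hC by simp
    ultimately have "PP dvd dcub C ua y0 - 3 * C * y0 ^ 2" by (rule dvd_diff)
    then show False using nua by (simp add: dcub_def)
  qed
  obtain r where r: "cub C ua ub r = 0" "PP dvd r - y0" using hensel[OF h1 h2] by blast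
  have "\<not> PP dvd y0" using y0u unit_iff by blast
  then have "\<not> PP dvd r" using pc_dvd[of r y0] r(2) by (simp add: pc_def)
  then have ru: "r dvd 1" using unit_iff by blast
  have "y = r" if y: "y \<in> uroots C ua ub" for y
  proof -
    have yy: "cub C ua ub y = 0" using y by (simp add: uroots_def)
    have "ua * (y - r) = - (C * (y ^ 3 - r ^ 3))" using yy r(1) by (simp add: cub_def algebra_simps)
    then have "PP dvd ua * (y - r)" using hC by simp
    then have "PP dvd y - r" using unit_mult_PP[OF ha] by blast
    moreover have "\<not> PP dvd dcub C ua y"
    proof
      assume "PP dvd dcub C ua y"
      moreover have "PP dvd 3 * C * y ^ 2" using hC by simp
      ultimately have "PP dvd dcub C ua y - 3 * C * y ^ 2" by (rule dvd_diff)
      then show False using nua by (simp add: dcub_def)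
    qed
    ultimately show "y = r" using hensel_unique[OF yy r(1)] by blast
  qed
  moreover have "r \<in> uroots C ua ub" using r(1) ru by (simp add: uroots_def)
  ultimately show ?thesis by blast
qed

lemma S3_sq:
  fixes ua B y :: "'p::prime_card zp"
  assumes "PP dvd B" "y \<in> uroots 1 ua B"
  shows "PP dvd y ^ 2 + ua"
proof -
  have yy: "y dvd 1" "cub 1 ua B y = 0" using assms(2) by (auto simp: uroots_def)
  have "y * (y ^ 2 + ua) = B" using yy(2) by (simp add: cub_def algebra_simps power2_eq_square power3_eq_cube)
  then have "PP dvd y * (y ^ 2 + ua)" using assms(1) by simp
  then show ?thesis using unit_mult_PP[OF yy(1)] by blast
qed

lemma S3_dcub:
  fixes ua y :: "'p::prime_card zp"
  assumes p3: "CARD('p) > 3" and ha: "ua dvd 1" and "PP dvd y ^ 2 + ua"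
  shows "\<not> PP dvd dcub 1 ua y"
proof
  assume "PP dvd dcub 1 ua y"
  moreover have "PP dvd 3 * (y ^ 2 + ua)" using assms(3) by (rule dvd_mult)
  ultimately have dd: "PP dvd 3 * (y ^ 2 + ua) - dcub 1 ua y" by (intro dvd_diff)
  have eq: "3 * (y ^ 2 + ua) - dcub 1 ua y = 2 * ua" by (simp add: dcub_def algebra_simps)
  have "PP dvd (2::'p zp) * ua" using dd unfolding eq .
  then have "PP dvd (2::'p zp) \<or> PP dvd ua" by (rule PP_prime)
  then show False using not_PP_dvd_2[OF p3] ha unit_iff by blast
qed

lemma S3_exist:
  fixes ua B y0 :: "'p::prime_card zp"
  assumes p3: "CARD('p) > 3" and ha: "ua dvd 1" and hB: "PP dvd B" and hy: "PP dvd y0 ^ 2 + ua"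
  shows "\<exists>r. r \<in> uroots 1 ua B \<and> pc r y0"
proof -
  have "cub 1 ua B y0 = y0 * (y0 ^ 2 + ua) - B" by (simp add: cub_def algebra_simps power2_eq_square power3_eq_cube)
  moreover have "PP dvd y0 * (y0 ^ 2 + ua) - B" using hy hB by (intro dvd_diff) simp_all
  ultimately have h1: "PP dvd cub 1 ua B y0" by simp
  have h2: "\<not> PP dvd dcub 1 ua y0" by (rule S3_dcub[OF p3 ha hy])
  obtain r where r: "cub 1 ua B r = 0" "PP dvd r - y0" using hensel[OF h1 h2] by blast
  have ny: "\<not> PP dvd y0"
  proof
    assume "PP dvd y0"
    then have "PP dvd y0 ^ 2" by (simp add: power2_eq_square)
    then have "PP dvd (y0 ^ 2 + ua) - y0 ^ 2" using hy by (intro dvd_diff)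
    then have "PP dvd ua" by simp
    then show False using ha unit_iff by blast
  qed
  have "pc r y0" using r(2) by (simp add: pc_def)
  then have "\<not> PP dvd r" using pc_dvd ny by blast
  then have "r dvd 1" using unit_iff by blast
  then show ?thesis using r(1) \<open>pc r y0\<close> by (auto simp: uroots_def)
qed

lemma S3_yes:
  fixes ua B :: "'p::prime_card zp"
  assumes p3: "CARD('p) > 3" and ha: "ua dvd 1" and hB: "PP dvd B"
    and hd: "res (- ua) ^ ((CARD('p) - 1) div 2) mod CARD('p) = 1"
  shows "\<exists>r1 r2. r1 \<noteq> r2 \<and> uroots 1 ua B = {r1, r2}"
proof -
  define pn where "pn = CARD('p)"
  have pr: "prime pn" unfolding pn_def by (rule prime_card)
  have mu: "- ua dvd 1" using ha by simp
  have d: "0 < res (- ua)" "res (- ua) < pn" using res_unit[OF mu] pn_def by auto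
  have p1: "pn > 1" using pr prime_gt_1_nat by blast
  have h2: "2 dvd pn - 1"
  proof -
    have "pn > 2" using p3 pn_def by simp
    then have "odd pn" using pr prime_odd_nat by blast
    then show ?thesis using p1 by presburger
  qed
  have hd': "res (- ua) ^ ((pn - 1) div 2) mod pn = 1" using hd pn_def by simp
  have "\<exists>c. [c ^ 2 = res (- ua)] (mod pn)" by (rule nt_root[OF pr _ h2 d(1) d(2) hd']) simp
  then obtain c where c: "[c ^ 2 = res (- ua)] (mod pn)" by blast
  define y0 where "y0 = (of_nat c :: 'p zp)"
  have "pc (of_nat (c ^ 2) :: 'p zp) (- ua)" using c pn_def by (simp only: pc_res_iff)
  then have "PP dvd y0 ^ 2 - (- ua)" by (simp add: pc_def y0_def)
  then have hy: "PP dvd y0 ^ 2 + ua" by simp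
  have hy': "PP dvd (- y0) ^ 2 + ua" using hy by simp
  obtain r1 where r1: "r1 \<in> uroots 1 ua B" "pc r1 y0" using S3_exist[OF p3 ha hB hy] by blast
  obtain r2 where r2: "r2 \<in> uroots 1 ua B" "pc r2 (- y0)" using S3_exist[OF p3 ha hB hy'] by blast
  have ny: "\<not> PP dvd y0"
  proof
    assume "PP dvd y0"
    then have "PP dvd y0 ^ 2" by (simp add: power2_eq_square)
    then have "PP dvd (y0 ^ 2 + ua) - y0 ^ 2" using hy by (intro dvd_diff)
    then have "PP dvd ua" by simp
    then show False using ha unit_iff by blast
  qed
  have "r1 \<noteq> r2"
  proof
    assume "r1 = r2"
    then have "pc y0 (- y0)" using r1(2) r2(2) pc_sym pc_trans by metis
    then have "PP dvd (2::'p zp) * y0" by (simp add: pc_def)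
    then have "PP dvd (2::'p zp) \<or> PP dvd y0" by (rule PP_prime)
    then show False using not_PP_dvd_2[OF p3] ny by blast
  qed
  moreover have "y = r1 \<or> y = r2" if y: "y \<in> uroots 1 ua B" for y
  proof -
    have yy: "y dvd 1" "cub 1 ua B y = 0" using y by (auto simp: uroots_def)
    have sq: "PP dvd y ^ 2 + ua" by (rule S3_sq[OF hB y])
    have "PP dvd (y ^ 2 + ua) - (y0 ^ 2 + ua)" using sq hy by (rule dvd_diff)
    moreover have "(y ^ 2 + ua) - (y0 ^ 2 + ua) = (y - y0) * (y - (- y0))" by (simp add: algebra_simps power2_eq_square)
    ultimately have "PP dvd (y - y0) * (y - (- y0))" by simp
    then have "PP dvd y - y0 \<or> PP dvd y - (- y0)" by (rule PP_prime)
    then have "pc y y0 \<or> pc y (- y0)" by (simp add: pc_def)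
    moreover have "\<not> PP dvd dcub 1 ua y" by (rule S3_dcub[OF p3 ha sq])
    moreover have c1: "cub 1 ua B r1 = 0" "cub 1 ua B r2 = 0" using r1(1) r2(1) by (auto simp: uroots_def)
    ultimately show ?thesis
    proof (elim disjE conjE)
      assume "pc y y0" "\<not> PP dvd dcub 1 ua y"
      then have "pc y r1" using pc_trans[OF _ pc_sym[OF r1(2)]] by blast
      then show ?thesis using hensel_unique[OF yy(2) c1(1)] \<open>\<not> PP dvd dcub 1 ua y\<close> unfolding pc_def by blast
    next
      assume "pc y (- y0)" "\<not> PP dvd dcub 1 ua y"
      then have "pc y r2" using pc_trans[OF _ pc_sym[OF r2(2)]] by blast
      then show ?thesis using hensel_unique[OF yy(2) c1(2)] \<open>\<not> PP dvd dcub 1 ua y\<close> unfolding pc_def by blast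
    qed
  qed
  ultimately have "uroots 1 ua B = {r1, r2}" using r1(1) r2(1) by blast
  then show ?thesis using \<open>r1 \<noteq> r2\<close> by blast
qed

lemma S3_no:
  fixes ua B :: "'p::prime_card zp"
  assumes p3: "CARD('p) > 3" and ha: "ua dvd 1" and hB: "PP dvd B" and ne: "uroots 1 ua B \<noteq> {}"
  shows "res (- ua) ^ ((CARD('p) - 1) div 2) mod CARD('p) = 1"
proof -
  obtain y where y: "y \<in> uroots 1 ua B" using ne by blast
  have sq: "PP dvd y ^ 2 + ua" by (rule S3_sq[OF hB y])
  have "pc (of_nat (res y) ^ 2) (y ^ 2 :: 'p zp)" using pc_pow[OF pc_sym[OF pc_res[of y]]] .
  moreover have "pc (y ^ 2) (- ua)" using sq by (simp add: pc_def)
  ultimately have "pc (of_nat (res y ^ 2) :: 'p zp) (- ua)" using pc_trans by simp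
  then have c: "[res y ^ 2 = res (- ua)] (mod CARD('p))" by (simp only: pc_res_iff)
  have mu: "- ua dvd 1" using ha by simp
  have "\<not> CARD('p) dvd res (- ua)" using res_unit[OF mu] by (auto dest: dvd_imp_le)
  moreover have "odd (CARD('p))" using prime_card[where 'a='p] p3 prime_odd_nat[of "CARD('p)"] by simp
  ultimately show ?thesis using nt_fermat_sq[OF prime_card[where 'a='p] _ c] by blast
qed


lemma poly_cubic: "poly (cubic_poly a b) x = x ^ 3 + a * x - b"
  by (simp add: cubic_poly_def algebra_simps power3_eq_cube)

lemma pi_shift:
  assumes "t \<le> m"
  shows "(qp_p :: 'p::prime_card qp) powi m = qp_p powi t * zp_to_qp (PP ^ nat (m - t))"
proof -
  have "(qp_p :: 'p qp) powi m = qp_p powi t * qp_p powi (m - t)" by (simp flip: powi_split)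
  moreover have "(qp_p :: 'p qp) powi (m - t) = zp_to_qp (PP ^ nat (m - t))"
    using assms by (simp add: power_int_nonneg_exp iota_simps qp_p_def)
  ultimately show ?thesis by simp
qed

lemma scale_poly:
  fixes ua ub y :: "'p::prime_card zp"
  assumes a: "a = zp_to_qp ua * qp_p powi \<alpha>" and b: "b = zp_to_qp ub * qp_p powi \<beta>"
    and t: "t \<le> 3 * \<xi>" "t \<le> \<alpha> + \<xi>" "t \<le> \<beta>"
  shows "poly (cubic_poly a b) (zp_to_qp y * qp_p powi \<xi>) =
    qp_p powi t * zp_to_qp (cub (PP ^ nat (3 * \<xi> - t)) (ua * PP ^ nat (\<alpha> + \<xi> - t)) (ub * PP ^ nat (\<beta> - t)) y)"
proof -
  have e1: "(zp_to_qp y * qp_p powi \<xi>) ^ 3 = zp_to_qp (y ^ 3) * (qp_p :: 'p qp) powi (3 * \<xi>)"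
    by (simp add: power_mult_distrib power_int_power' iota_simps mult.commute)
  have e2: "a * (zp_to_qp y * qp_p powi \<xi>) = zp_to_qp (ua * y) * (qp_p :: 'p qp) powi (\<alpha> + \<xi>)"
    unfolding a powi_split iota_mult by (simp only: mult_ac)
  show ?thesis
    unfolding poly_cubic e1 e2 b pi_shift[OF t(1)] pi_shift[OF t(2)] pi_shift[OF t(3)]
    by (simp add: cub_def iota_simps algebra_simps)
qed

lemma scale_root:
  fixes ua ub y :: "'p::prime_card zp"
  assumes a: "a = zp_to_qp ua * qp_p powi \<alpha>" and b: "b = zp_to_qp ub * qp_p powi \<beta>"
    and t: "t \<le> 3 * \<xi>" "t \<le> \<alpha> + \<xi>" "t \<le> \<beta>"
  shows "poly (cubic_poly a b) (zp_to_qp y * qp_p powi \<xi>) = 0 \<longleftrightarrow>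
    cub (PP ^ nat (3 * \<xi> - t)) (ua * PP ^ nat (\<alpha> + \<xi> - t)) (ub * PP ^ nat (\<beta> - t)) y = 0"
  unfolding scale_poly[OF a b t]
  using qp_p_nonzero[where 'p='p] by (simp add: power_int_not_zero iota_eq_0)

definition rootsv :: "'p::prime_card qp \<Rightarrow> 'p qp \<Rightarrow> int \<Rightarrow> 'p qp set" where
  "rootsv a b \<xi> = {x. poly (cubic_poly a b) x = 0 \<and> x \<noteq> 0 \<and> qp_val x = \<xi>}"

lemma rootsv_image:
  fixes ua ub :: "'p::prime_card zp"
  assumes a: "a = zp_to_qp ua * qp_p powi \<alpha>" and b: "b = zp_to_qp ub * qp_p powi \<beta>"
    and t: "t \<le> 3 * \<xi>" "t \<le> \<alpha> + \<xi>" "t \<le> \<beta>"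
  shows "rootsv a b \<xi> = (\<lambda>y. zp_to_qp y * qp_p powi \<xi>) `
           uroots (PP ^ nat (3 * \<xi> - t)) (ua * PP ^ nat (\<alpha> + \<xi> - t)) (ub * PP ^ nat (\<beta> - t))"
    and "inj_on (\<lambda>y. zp_to_qp y * (qp_p :: 'p qp) powi \<xi>) (uroots C A B)"
proof -
  show "inj_on (\<lambda>y. zp_to_qp y * (qp_p :: 'p qp) powi \<xi>) (uroots C A B)"
  proof (rule inj_onI)
    fix x y assume h: "x \<in> uroots C A B" "y \<in> uroots C A B"
      "zp_to_qp x * (qp_p :: 'p qp) powi \<xi> = zp_to_qp y * qp_p powi \<xi>"
    have "x dvd 1" "y dvd 1" using h(1,2) by (auto simp: uroots_def)
    then show "x = y" using qp_decomp_unique[of x y \<xi> \<xi>] h(3) by blast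
  qed
  show "rootsv a b \<xi> = (\<lambda>y. zp_to_qp y * qp_p powi \<xi>) `
           uroots (PP ^ nat (3 * \<xi> - t)) (ua * PP ^ nat (\<alpha> + \<xi> - t)) (ub * PP ^ nat (\<beta> - t))"
  proof (intro equalityI subsetI)
    fix x assume x: "x \<in> rootsv a b \<xi>"
    then have xr: "poly (cubic_poly a b) x = 0" "x \<noteq> 0" "qp_val x = \<xi>" by (auto simp: rootsv_def)
    obtain u k where u: "u dvd 1" "x = zp_to_qp u * qp_p powi k" using qp_decomp[OF xr(2)] by blast
    have "k = \<xi>" using xr(3) u qp_val_eq by metis
    then have xu: "x = zp_to_qp u * qp_p powi \<xi>" using u by simp
    then have "cub (PP ^ nat (3 * \<xi> - t)) (ua * PP ^ nat (\<alpha> + \<xi> - t)) (ub * PP ^ nat (\<beta> - t)) u = 0"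
      using scale_root[OF a b t, of u] xr(1) by simp
    then show "x \<in> (\<lambda>y. zp_to_qp y * qp_p powi \<xi>) `
           uroots (PP ^ nat (3 * \<xi> - t)) (ua * PP ^ nat (\<alpha> + \<xi> - t)) (ub * PP ^ nat (\<beta> - t))"
      using xu u(1) by (auto simp: uroots_def)
  next
    fix x assume "x \<in> (\<lambda>y. zp_to_qp y * qp_p powi \<xi>) `
           uroots (PP ^ nat (3 * \<xi> - t)) (ua * PP ^ nat (\<alpha> + \<xi> - t)) (ub * PP ^ nat (\<beta> - t))"
    then obtain y where y: "y dvd 1" "cub (PP ^ nat (3 * \<xi> - t)) (ua * PP ^ nat (\<alpha> + \<xi> - t)) (ub * PP ^ nat (\<beta> - t)) y = 0"
      "x = zp_to_qp y * qp_p powi \<xi>" by (auto simp: uroots_def)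
    have "poly (cubic_poly a b) x = 0" using scale_root[OF a b t, of y] y by simp
    moreover have "x \<noteq> 0" using qp_nonzero_dec[OF y(1)] y(3) by simp
    moreover have "qp_val x = \<xi>" using qp_val_eq[OF y(1)] y(3) by simp
    ultimately show "x \<in> rootsv a b \<xi>" by (simp add: rootsv_def)
  qed
qed

lemma root_val:
  fixes ua ub u :: "'p::prime_card zp"
  assumes a: "a = zp_to_qp ua * qp_p powi \<alpha>" and b: "b = zp_to_qp ub * qp_p powi \<beta>"
    and ua: "ua dvd 1" and ub: "ub dvd 1"
    and x: "poly (cubic_poly a b) x = 0" "x \<noteq> 0"
  shows "(3 * qp_val x \<noteq> \<alpha> + qp_val x \<longrightarrow> \<beta> = min (3 * qp_val x) (\<alpha> + qp_val x)) \<and>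
         \<beta> \<ge> min (3 * qp_val x) (\<alpha> + qp_val x)"
proof -
  have an: "a \<noteq> 0" using a qp_nonzero_dec[OF ua] by simp
  have bn: "b \<noteq> 0" using b qp_nonzero_dec[OF ub] by simp
  have va: "qp_val a = \<alpha>" using a qp_val_eq[OF ua] by simp
  have vb: "qp_val b = \<beta>" using b qp_val_eq[OF ub] by simp
  have s: "x ^ 3 + a * x = b" using x(1) by (simp add: poly_cubic algebra_simps)
  have x3: "x ^ 3 \<noteq> 0" using x(2) by simp
  have ax: "a * x \<noteq> 0" using x(2) an by simp
  have v1: "qp_val (x ^ 3) = 3 * qp_val x"
    using qp_val_mult[of x "x^2"] qp_val_mult[of x x] x(2) by (simp add: power3_eq_cube power2_eq_square mult.assoc)
  have v2: "qp_val (a * x) = \<alpha> + qp_val x" using qp_val_mult[OF an x(2)] va by simp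
  show ?thesis using qp_val_ultra[OF x3 ax] s bn v1 v2 vb by simp
qed

lemma order_one:
  fixes p :: "'a::{idom} poly"
  assumes "p \<noteq> 0" "poly p r = 0" "poly (pderiv p) r \<noteq> 0"
  shows "Polynomial.order r p = 1"
proof -
  have o1: "Polynomial.order r p \<noteq> 0" using assms(1,2) order_root by blast
  have "Polynomial.order r p < 2"
  proof (rule ccontr)
    assume "\<not> Polynomial.order r p < 2"
    then have "[:-r, 1:] ^ 2 dvd [:-r, 1:] ^ Polynomial.order r p" by (simp add: le_imp_power_dvd)
    moreover have "[:-r, 1:] ^ Polynomial.order r p dvd p" using Polynomial.order[OF assms(1)] by blast
    ultimately have "[:-r, 1:] ^ 2 dvd p" by (rule dvd_trans)
    then obtain q where q: "p = [:-r, 1:] ^ Suc (Suc 0) * q" by (auto elim: dvdE simp: numeral_2_eq_2)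
    have "pderiv p = [:-r, 1:] ^ Suc (Suc 0) * pderiv q + q * pderiv ([:-r, 1:] ^ Suc (Suc 0))" unfolding q by (rule pderiv_mult)
    moreover have "pderiv ([:-r, 1:] ^ Suc (Suc 0)) = Polynomial.smult (of_nat (Suc (Suc 0))) ([:-r, 1:] ^ Suc 0) * pderiv [:-r, 1:]"
      by (rule pderiv_power_Suc)
    ultimately have "poly (pderiv p) r = 0" by simp
    then show False using assms(3) by blast
  qed
  then show ?thesis using o1 by simp
qed

lemma pderiv_cubic: "pderiv (cubic_poly a b) = [:a, 0, 3:]"
  by (simp add: cubic_poly_def pderiv_pCons)

lemma cubic_nonzero: "cubic_poly a b \<noteq> 0"
  by (simp add: cubic_poly_def)

lemma class_card:
  fixes T :: "'p::prime_card qp set"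
  assumes "\<And>x. x \<in> T \<Longrightarrow> x \<noteq> 0 \<and> qp_val x = \<xi>"
  shows "card (T \<inter> Zp_units) = (if \<xi> = 0 then card T else 0)"
    and "card (T \<inter> (Zp_set - Zp_units)) = (if \<xi> > 0 then card T else 0)"
    and "card (T \<inter> (UNIV - Zp_set)) = (if \<xi> < 0 then card T else 0)"
proof -
  have u: "x \<in> Zp_units \<longleftrightarrow> \<xi> = 0" if "x \<in> T" for x
    using assms[OF that] abs_one_iff(1)[of x] by (simp add: Zp_units_def)
  have z: "x \<in> Zp_set - Zp_units \<longleftrightarrow> \<xi> > 0" if "x \<in> T" for x
    using assms[OF that] abs_one_iff(1,4)[of x] by (auto simp: Zp_units_def Zp_set_def)
  have o: "x \<in> UNIV - Zp_set \<longleftrightarrow> \<xi> < 0" if "x \<in> T" for x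
    using assms[OF that] abs_one_iff(4)[of x] by (auto simp: Zp_set_def)
  show "card (T \<inter> Zp_units) = (if \<xi> = 0 then card T else 0)"
  proof (cases "\<xi> = 0")
    case True then have "T \<inter> Zp_units = T" using u by blast
    then show ?thesis using True by simp
  next
    case False then have "T \<inter> Zp_units = {}" using u by blast
    then show ?thesis using False by simp
  qed
  show "card (T \<inter> (Zp_set - Zp_units)) = (if \<xi> > 0 then card T else 0)"
  proof (cases "\<xi> > 0")
    case True then have "T \<inter> (Zp_set - Zp_units) = T" using z by blast
    then show ?thesis using True by simp
  next
    case False then have "T \<inter> (Zp_set - Zp_units) = {}" using z by blast
    then show ?thesis using False by simp
  qed
  show "card (T \<inter> (UNIV - Zp_set)) = (if \<xi> < 0 then card T else 0)"
  proof (cases "\<xi> < 0")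
    case True then have "T \<inter> (UNIV - Zp_set) = T" using o by blast
    then show ?thesis using True by simp
  next
    case False then have "T \<inter> (UNIV - Zp_set) = {}" using o by blast
    then show ?thesis using False by simp
  qed
qed


lemma qp_val_num:
  assumes p3: "CARD('p::prime_card) > 3"
  shows "qp_val (3::'p qp) = 0" "qp_val (2::'p qp) = 0" "(3::'p qp) \<noteq> 0" "(2::'p qp) \<noteq> 0"
proof -
  have u3: "(3::'p zp) dvd 1" using not_PP_dvd_3[OF p3] unit_iff by blast
  have u2: "(2::'p zp) dvd 1" using not_PP_dvd_2[OF p3] unit_iff by blast
  have "zp_to_qp (of_nat 3 :: 'p zp) = of_nat 3" by (rule iota_of_nat)
  then have e3: "(3::'p qp) = zp_to_qp 3 * qp_p powi 0" by simp
  have "zp_to_qp (of_nat 2 :: 'p zp) = of_nat 2" by (rule iota_of_nat)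
  then have e2: "(2::'p qp) = zp_to_qp 2 * qp_p powi 0" by simp
  show "qp_val (3::'p qp) = 0" using qp_val_eq[OF u3, of 0] e3 by simp
  show "qp_val (2::'p qp) = 0" using qp_val_eq[OF u2, of 0] e2 by simp
  show "(3::'p qp) \<noteq> 0" using qp_nonzero_dec[OF u3, of 0] e3 by simp
  show "(2::'p qp) \<noteq> 0" using qp_nonzero_dec[OF u2, of 0] e2 by simp
qed

lemma qp_val_pow:
  fixes x :: "'p::prime_card qp"
  assumes "x \<noteq> 0" shows "qp_val (x ^ n) = int n * qp_val x"
proof (induction n)
  case 0
  have "qp_val ((qp_p :: 'p qp) powi 0) = 0" by (rule qp_val_pi)
  then show ?case by simp
next
  case (Suc n) then show ?case using qp_val_mult[of x "x ^ n"] assms by (simp add: algebra_simps)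
qed

lemma order_root_one:
  fixes a b x :: "'p::prime_card qp"
  assumes p3: "CARD('p) > 3" and an: "a \<noteq> 0" and bn: "b \<noteq> 0"
    and ne: "2 * qp_val b \<noteq> 3 * qp_val a" and x: "poly (cubic_poly a b) x = 0"
  shows "Polynomial.order x (cubic_poly a b) = 1"
proof (rule order_one[OF cubic_nonzero x])
  show "poly (pderiv (cubic_poly a b)) x \<noteq> 0"
  proof
    assume "poly (pderiv (cubic_poly a b)) x = 0"
    then have ha: "a = - (3 * x ^ 2)" by (simp add: pderiv_cubic algebra_simps power2_eq_square eq_neg_iff_add_eq_0)
    have s: "b = x ^ 3 + a * x" using x by (simp add: poly_cubic)
    then have hb: "b = - (2 * x ^ 3)" using ha by (simp add: algebra_simps power2_eq_square power3_eq_cube)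
    have xn: "x \<noteq> 0" using x bn by (auto simp: poly_cubic)
    have "qp_val a = 2 * qp_val x"
      using ha qp_val_minus[of "3 * x^2"] qp_val_mult[of 3 "x^2"] qp_val_num[OF p3] qp_val_pow[OF xn, of 2] xn
      by simp
    moreover have "qp_val b = 3 * qp_val x"
      using hb qp_val_minus[of "2 * x^3"] qp_val_mult[of 2 "x^3"] qp_val_num[OF p3] qp_val_pow[OF xn, of 3] xn
      by simp
    ultimately show False using ne by simp
  qed
qed

lemma root_count_card:
  fixes a b :: "'p::prime_card qp"
  assumes p3: "CARD('p) > 3" and an: "a \<noteq> 0" and bn: "b \<noteq> 0" and ne: "2 * qp_val b \<noteq> 3 * qp_val a"
  shows "root_count a b S = card ({x. poly (cubic_poly a b) x = 0} \<inter> S)"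
proof -
  have "root_count a b S = (\<Sum>r \<in> {r \<in> S. poly (cubic_poly a b) r = 0}. 1)"
    unfolding root_count_def by (rule sum.cong) (use order_root_one[OF p3 an bn ne] in auto)
  also have "\<dots> = card ({x. poly (cubic_poly a b) x = 0} \<inter> S)"
    by (simp add: Int_def conj_commute)
  finally show ?thesis .
qed


lemma p_mod3: "CARD('p::prime_card) > 3 \<Longrightarrow> CARD('p) mod 3 = 1 \<or> CARD('p) mod 3 = 2"
proof -
  assume p3: "CARD('p) > 3"
  have pr: "prime (CARD('p))" by (rule prime_card)
  have "CARD('p) mod 3 \<noteq> 0"
  proof
    assume "CARD('p) mod 3 = 0"
    then have "3 dvd CARD('p)" by presburger
    then have "3 = CARD('p)" using pr by (metis prime_nat_iff numeral_eq_one_iff semiring_norm(86))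
    then show False using p3 by simp
  qed
  then show ?thesis by presburger
qed

lemma case_D1:
  fixes a b :: "'p::prime_card qp" and ua ub :: "'p zp"
  assumes p3: "CARD('p) > 3"
    and a: "a = zp_to_qp ua * qp_p powi \<alpha>" and b: "b = zp_to_qp ub * qp_p powi \<beta>"
    and ua: "ua dvd 1" and ub: "ub dvd 1"
    and h: "2 * \<beta> < 3 * \<alpha>" and cb: "cbrt_exists b"
  shows "\<exists>N m. \<beta> = 3 * m \<and> ((N = 3 \<and> CARD('p) mod 3 = 1) \<or> (N = 1 \<and> CARD('p) mod 3 = 2)) \<and>
     card {x. poly (cubic_poly a b) x = 0} = N \<and>
     card ({x. poly (cubic_poly a b) x = 0} \<inter> Zp_units) = (if m = 0 then N else 0) \<and>
     card ({x. poly (cubic_poly a b) x = 0} \<inter> (Zp_set - Zp_units)) = (if m > 0 then N else 0) \<and>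
     card ({x. poly (cubic_poly a b) x = 0} \<inter> (UNIV - Zp_set)) = (if m < 0 then N else 0)"
proof -
  define R where "R = {x. poly (cubic_poly a b) x = 0}"
  have vb: "qp_val b = \<beta>" using b qp_val_eq[OF ub] by simp
  have bn: "b \<noteq> 0" using b qp_nonzero_dec[OF ub] by simp
  have "(3::int) dvd - \<beta>" using cb vb by (simp add: cbrt_exists_def)
  then obtain m where m: "\<beta> = 3 * m" by (metis dvdE minus_equation_iff mult_minus_right)
  have RR: "R = rootsv a b m"
  proof (intro equalityI subsetI)
    fix x assume "x \<in> R"
    then have x: "poly (cubic_poly a b) x = 0" by (simp add: R_def)
    then have xn: "x \<noteq> 0" using bn by (auto simp: poly_cubic)
    have "qp_val x = m" using root_val[OF a b ua ub x xn] h m unfolding min_def by (auto split: if_splits)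
    then show "x \<in> rootsv a b m" using x xn by (simp add: rootsv_def)
  qed (simp add: rootsv_def R_def)
  define A where "A = ua * PP ^ nat (\<alpha> + m - 3 * m)"
  have img: "rootsv a b m = (\<lambda>y. zp_to_qp y * qp_p powi m) ` uroots 1 A ub"
    using rootsv_image(1)[OF a b, of "3 * m" m] m h by (simp add: A_def)
  have inj: "inj_on (\<lambda>y. zp_to_qp y * (qp_p :: 'p qp) powi m) (uroots 1 A ub)" using rootsv_image(2)[OF a b, of "3 * m" m] h m by simp
  have cardR: "card R = card (uroots 1 A ub)" unfolding RR img by (rule card_image[OF inj])
  have hA: "PP dvd A"
  proof -
    have "nat (\<alpha> + m - 3 * m) > 0" using h m by simp
    then show ?thesis unfolding A_def by (simp add: dvd_power)
  qed
  obtain N where N: "(N = 3 \<and> CARD('p) mod 3 = 1) \<or> (N = 1 \<and> CARD('p) mod 3 = 2)" "card R = N"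
  proof (cases "CARD('p) mod 3 = 1")
    case True
    have h3: "3 dvd CARD('p) - 1" using True by presburger
    then have g: "gcd 3 (CARD('p) - 1) = 3" by (simp add: gcd_nat.absorb1)
    have "qp_digit0 b = res ub" using digit0_eq[OF ub] b by (simp add: res_def)
    then have hd: "res ub ^ ((CARD('p) - 1) div 3) mod CARD('p) = 1" using cb g by (simp add: cbrt_exists_def)
    obtain r1 r2 r3 where r: "r1 \<noteq> r2" "r1 \<noteq> r3" "r2 \<noteq> r3" "uroots 1 A ub = {r1, r2, r3}"
      using S1_p1[OF p3 True hA ub hd] by blast
    have "card R = 3" using cardR r by simp
    then show ?thesis using that True by blast
  next
    case False
    then have p2: "CARD('p) mod 3 = 2" using p_mod3[OF p3] by blast
    obtain r where "uroots 1 A ub = {r}" using S1_p2[OF p3 p2 hA ub] by blast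
    then have "card R = 1" using cardR by simp
    then show ?thesis using that p2 by blast
  qed
  have vals: "\<And>x. x \<in> R \<Longrightarrow> x \<noteq> 0 \<and> qp_val x = m" unfolding RR by (simp add: rootsv_def)
  show ?thesis
    using N m class_card[of R m, OF vals] unfolding R_def by blast
qed


lemma sqrt_iff:
  fixes a :: "'p::prime_card qp" and ua :: "'p zp"
  assumes a: "a = zp_to_qp ua * qp_p powi \<alpha>" and ua: "ua dvd 1"
  shows "sqrt_exists (- a) \<longleftrightarrow> res (- ua) ^ ((CARD('p) - 1) div 2) mod CARD('p) = 1 \<and> even \<alpha>"
proof -
  have ma: "- a = zp_to_qp (- ua) * qp_p powi \<alpha>" using a by (simp add: iota_minus)
  have mu: "- ua dvd 1" using ua by simp
  have "- a \<noteq> 0" using qp_nonzero_dec[OF mu] ma by simp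
  moreover have "qp_digit0 (- a) = res (- ua)" using digit0_eq[OF mu] ma by (simp add: res_def)
  moreover have "qp_val (- a) = \<alpha>" using qp_val_eq[OF mu] ma by simp
  ultimately show ?thesis by (simp add: sqrt_exists_def)
qed

lemma case_D3:
  fixes a b :: "'p::prime_card qp" and ua ub :: "'p zp"
  assumes p3: "CARD('p) > 3"
    and a: "a = zp_to_qp ua * qp_p powi \<alpha>" and b: "b = zp_to_qp ub * qp_p powi \<beta>"
    and ua: "ua dvd 1" and ub: "ub dvd 1"
    and h: "3 * \<alpha> < 2 * \<beta>"
  shows "\<exists>R1 R2 m2. {x. poly (cubic_poly a b) x = 0} = R1 \<union> R2 \<and> R1 \<inter> R2 = {} \<and> finite R1 \<and> finite R2 \<and>
     card R1 = 1 \<and> (\<forall>x\<in>R1. x \<noteq> 0 \<and> qp_val x = \<beta> - \<alpha>) \<and> (\<forall>x\<in>R2. x \<noteq> 0 \<and> qp_val x = m2) \<and>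
     card R2 = (if sqrt_exists (- a) then 2 else 0) \<and> (sqrt_exists (- a) \<longrightarrow> \<alpha> = 2 * m2)"
proof -
  define R where "R = {x. poly (cubic_poly a b) x = 0}"
  have bn: "b \<noteq> 0" using b qp_nonzero_dec[OF ub] by simp
  define R1 where "R1 = rootsv a b (\<beta> - \<alpha>)"
  define m2 where "m2 = \<alpha> div 2"
  define R2 where "R2 = (if even \<alpha> then rootsv a b m2 else {})"
  have rv: "qp_val x = \<beta> - \<alpha> \<or> 2 * qp_val x = \<alpha>" if "x \<in> R" for x
  proof -
    have x: "poly (cubic_poly a b) x = 0" using that by (simp add: R_def)
    then have xn: "x \<noteq> 0" using bn by (auto simp: poly_cubic)
    show ?thesis using root_val[OF a b ua ub x xn] h unfolding min_def by (auto split: if_splits)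
  qed
  have RU: "R = R1 \<union> R2"
  proof (intro equalityI subsetI)
    fix x assume xR: "x \<in> R"
    then have x: "poly (cubic_poly a b) x = 0" by (simp add: R_def)
    then have xn: "x \<noteq> 0" using bn by (auto simp: poly_cubic)
    show "x \<in> R1 \<union> R2"
    proof (cases "qp_val x = \<beta> - \<alpha>")
      case True then show ?thesis using x xn by (simp add: R1_def rootsv_def)
    next
      case False
      then have "2 * qp_val x = \<alpha>" using rv[OF xR] by blast
      then have "even \<alpha>" "qp_val x = m2" unfolding m2_def by auto
      then show ?thesis using x xn by (simp add: R2_def rootsv_def)
    qed
  next
    fix x assume "x \<in> R1 \<union> R2"
    then show "x \<in> R" by (auto simp: R1_def R2_def R_def rootsv_def split: if_splits)
  qed
  have v1: "\<forall>x\<in>R1. x \<noteq> 0 \<and> qp_val x = \<beta> - \<alpha>" by (simp add: R1_def rootsv_def)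
  have v2: "\<forall>x\<in>R2. x \<noteq> 0 \<and> qp_val x = m2" by (simp add: R2_def rootsv_def)
  have disj: "R1 \<inter> R2 = {}"
  proof -
    have "\<beta> - \<alpha> \<noteq> m2" if "even \<alpha>" using that h unfolding m2_def by auto
    then show ?thesis using v1 v2 by (auto simp: R2_def)
  qed
  have img1: "R1 = (\<lambda>y. zp_to_qp y * qp_p powi (\<beta> - \<alpha>)) ` uroots (PP ^ nat (2 * \<beta> - 3 * \<alpha>)) ua ub"
    using rootsv_image(1)[OF a b, of \<beta> "\<beta> - \<alpha>"] h unfolding R1_def by (simp add: algebra_simps)
  have inj1: "inj_on (\<lambda>y. zp_to_qp y * (qp_p :: 'p qp) powi (\<beta> - \<alpha>)) (uroots (PP ^ nat (2 * \<beta> - 3 * \<alpha>)) ua ub)"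
    using rootsv_image(2)[OF a b, of \<beta> "\<beta> - \<alpha>"] h by simp
  have "PP dvd (PP::'p zp) ^ nat (2 * \<beta> - 3 * \<alpha>)" using h by (simp add: dvd_power)
  then obtain r where r: "uroots (PP ^ nat (2 * \<beta> - 3 * \<alpha>)) ua ub = {r}" using S2[OF _ ua ub] by blast
  have c1: "card R1 = 1" unfolding img1 using card_image[OF inj1] r by simp
  have f1: "finite R1" unfolding img1 r by simp
  have c2: "finite R2 \<and> card R2 = (if sqrt_exists (- a) then 2 else 0)"
  proof (cases "even \<alpha>")
    case False
    then show ?thesis using sqrt_iff[OF a ua] by (simp add: R2_def)
  next
    case True
    then have am: "\<alpha> = 2 * m2" unfolding m2_def by simp
    define B where "B = ub * PP ^ nat (\<beta> - 3 * m2)"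
    have img2: "R2 = (\<lambda>y. zp_to_qp y * qp_p powi m2) ` uroots 1 ua B"
      using rootsv_image(1)[OF a b, of "3 * m2" m2] h am True unfolding R2_def B_def by (simp add: algebra_simps)
    have inj2: "inj_on (\<lambda>y. zp_to_qp y * (qp_p :: 'p qp) powi m2) (uroots 1 ua B)"
      using rootsv_image(2)[OF a b, of "3 * m2" m2] h am by simp
    have hB: "PP dvd B"
    proof -
      have "nat (\<beta> - 3 * m2) > 0" using h am by simp
      then show ?thesis unfolding B_def by (simp add: dvd_power)
    qed
    show ?thesis
    proof (cases "res (- ua) ^ ((CARD('p) - 1) div 2) mod CARD('p) = 1")
      case True
      obtain r1 r2 where rr: "r1 \<noteq> r2" "uroots 1 ua B = {r1, r2}" using S3_yes[OF p3 ua hB True] by blast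
      have "sqrt_exists (- a)" using sqrt_iff[OF a ua] True \<open>even \<alpha>\<close> by simp
      moreover have "card R2 = 2" unfolding img2 using card_image[OF inj2] rr by simp
      moreover have "finite R2" unfolding img2 rr(2) by simp
      ultimately show ?thesis by simp
    next
      case False
      then have "uroots 1 ua B = {}" using S3_no[OF p3 ua hB] by blast
      moreover have "\<not> sqrt_exists (- a)" using sqrt_iff[OF a ua] False by simp
      ultimately show ?thesis unfolding img2 by simp
    qed
  qed
  have "sqrt_exists (- a) \<longrightarrow> \<alpha> = 2 * m2" using sqrt_iff[OF a ua] unfolding m2_def by auto
  then show ?thesis using RU disj f1 c1 c2 v1 v2 unfolding R_def by blast
qed


theorem mainTheorem1:
  fixes a b :: "'p::prime_card qp"
  assumes p3: "CARD('p) > 3"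
    and ab: "a * b \<noteq> 0"
    and D: "(a, b) \<in> Delta1 \<union> Delta3"
  shows
    "(solvable_in a b Zp_units 3 \<longleftrightarrow>
        (a, b) \<in> Delta1 \<and> padic_abs b = 1 \<and> CARD('p) mod 3 = 1)
   \<and> (solvable_in a b (Zp_set - Zp_units) 3 \<longleftrightarrow>
        ((a, b) \<in> Delta1 \<and> padic_abs b < 1 \<and> CARD('p) mod 3 = 1) \<or>
        ((a, b) \<in> Delta3 \<and> padic_abs a < 1 \<and> sqrt_exists (- a)))
   \<and> (solvable_in a b (UNIV - Zp_set) 3 \<longleftrightarrow>
        ((a, b) \<in> Delta1 \<and> padic_abs b > 1 \<and> CARD('p) mod 3 = 1) \<or>
        ((a, b) \<in> Delta3 \<and> padic_abs b > padic_abs a \<and> sqrt_exists (- a)))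
   \<and> (solvable_in2 a b (Zp_set - Zp_units) 1 Zp_units 2 \<longleftrightarrow>
        (a, b) \<in> Delta3 \<and> padic_abs a = 1 \<and> sqrt_exists (- a))
   \<and> (solvable_in2 a b Zp_units 1 (UNIV - Zp_set) 2 \<longleftrightarrow>
        (a, b) \<in> Delta3 \<and> padic_abs a = padic_abs b \<and> sqrt_exists (- a))
   \<and> (solvable_in2 a b (Zp_set - Zp_units) 1 (UNIV - Zp_set) 2 \<longleftrightarrow>
        (a, b) \<in> Delta3 \<and> padic_abs a > padic_abs b \<and> padic_abs a > 1 \<and> sqrt_exists (- a))
   \<and> (solvable_in a b Zp_units 1 \<longleftrightarrow>
        ((a, b) \<in> Delta1 \<and> padic_abs b = 1 \<and> CARD('p) mod 3 = 2) \<or>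
        ((a, b) \<in> Delta3 \<and> padic_abs a = padic_abs b \<and> \<not> sqrt_exists (- a)))
   \<and> (solvable_in a b (Zp_set - Zp_units) 1 \<longleftrightarrow>
        ((a, b) \<in> Delta1 \<and> padic_abs b < 1 \<and> CARD('p) mod 3 = 2) \<or>
        ((a, b) \<in> Delta3 \<and> padic_abs a > padic_abs b \<and> \<not> sqrt_exists (- a)))
   \<and> (solvable_in a b (UNIV - Zp_set) 1 \<longleftrightarrow>
        ((a, b) \<in> Delta1 \<and> padic_abs b > 1 \<and> CARD('p) mod 3 = 2) \<or>
        ((a, b) \<in> Delta3 \<and> padic_abs a < padic_abs b \<and> \<not> sqrt_exists (- a)))"
proof -
  have an: "a \<noteq> 0" and bn: "b \<noteq> 0" using ab by auto
  obtain ua \<alpha> where A: "ua dvd 1" "a = zp_to_qp ua * qp_p powi \<alpha>" using qp_decomp[OF an] by blast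
  obtain ub \<beta> where B: "ub dvd 1" "b = zp_to_qp ub * qp_p powi \<beta>" using qp_decomp[OF bn] by blast
  have va: "qp_val a = \<alpha>" using A qp_val_eq by metis
  have vb: "qp_val b = \<beta>" using B qp_val_eq by metis
  have D1: "(a, b) \<in> Delta1 \<longleftrightarrow> 2 * \<beta> < 3 * \<alpha> \<and> cbrt_exists b" using Delta1_iff[OF an bn] va vb by simp
  have D3: "(a, b) \<in> Delta3 \<longleftrightarrow> 3 * \<alpha> < 2 * \<beta>" using Delta3_iff[OF an bn] va vb by simp
  have ne: "2 * qp_val b \<noteq> 3 * qp_val a" using D D1 D3 va vb by auto
  have rc: "root_count a b S = card ({x. poly (cubic_poly a b) x = 0} \<inter> S)" for S
    by (rule root_count_card[OF p3 an bn ne])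
  have aU: "padic_abs a = 1 \<longleftrightarrow> \<alpha> = 0" "padic_abs a < 1 \<longleftrightarrow> \<alpha> > 0" "padic_abs a > 1 \<longleftrightarrow> \<alpha> < 0"
    using abs_one_iff[OF an] va by simp_all
  have bU: "padic_abs b = 1 \<longleftrightarrow> \<beta> = 0" "padic_abs b < 1 \<longleftrightarrow> \<beta> > 0" "padic_abs b > 1 \<longleftrightarrow> \<beta> < 0"
    using abs_one_iff[OF bn] vb by simp_all
  have abE: "padic_abs a = padic_abs b \<longleftrightarrow> \<alpha> = \<beta>" using abs_eq_iff[OF an bn] va vb by auto
  have abL: "padic_abs a < padic_abs b \<longleftrightarrow> \<beta> < \<alpha>" using abs_less_iff[OF an bn] va vb by simp
  have baL: "padic_abs b < padic_abs a \<longleftrightarrow> \<alpha> < \<beta>" using abs_less_iff[OF bn an] va vb by simp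
  define R where "R = {x. poly (cubic_poly a b) x = 0}"
  have RU: "R \<inter> UNIV = R" by simp
  note defs = solvable_in_def solvable_in2_def rc R_def[symmetric] RU aU bU abE abL baL D3
  show ?thesis
  proof (cases "(a, b) \<in> Delta1")
    case True
    then have h: "2 * \<beta> < 3 * \<alpha>" "cbrt_exists b" using D1 by auto
    obtain N m where Nm: "\<beta> = 3 * m" "(N = 3 \<and> CARD('p) mod 3 = 1) \<or> (N = 1 \<and> CARD('p) mod 3 = 2)"
      "card R = N" "card (R \<inter> Zp_units) = (if m = 0 then N else 0)"
      "card (R \<inter> (Zp_set - Zp_units)) = (if m > 0 then N else 0)"
      "card (R \<inter> (UNIV - Zp_set)) = (if m < 0 then N else 0)"
      using case_D1[OF p3 A(2) B(2) A(1) B(1) h] unfolding R_def by blast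
    show ?thesis unfolding defs Nm using True h Nm(1,2) by auto
  next
    case False
    then have h: "3 * \<alpha> < 2 * \<beta>" using D D3 by auto
    obtain R1 R2 m2 where H: "R = R1 \<union> R2" "R1 \<inter> R2 = {}" "finite R1" "finite R2"
      "card R1 = 1" "\<forall>x\<in>R1. x \<noteq> 0 \<and> qp_val x = \<beta> - \<alpha>" "\<forall>x\<in>R2. x \<noteq> 0 \<and> qp_val x = m2"
      "card R2 = (if sqrt_exists (- a) then 2 else 0)" "sqrt_exists (- a) \<longrightarrow> \<alpha> = 2 * m2"
      using case_D3[OF p3 A(2) B(2) A(1) B(1) h] unfolding R_def by blast
    have cS: "card (R \<inter> S) = card (R1 \<inter> S) + card (R2 \<inter> S)" for S
    proof -
      have "R \<inter> S = (R1 \<inter> S) \<union> (R2 \<inter> S)" using H(1) by blast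
      moreover have "(R1 \<inter> S) \<inter> (R2 \<inter> S) = {}" using H(2) by blast
      ultimately show ?thesis using H(3,4) by (simp add: card_Un_disjoint)
    qed
    have cT: "card R = card R1 + card R2" using cS[of UNIV] by simp
    note c1 = class_card[of R1 "\<beta> - \<alpha>"] class_card[of R2 m2]
    have cc: "card (R \<inter> Zp_units) = (if \<beta> - \<alpha> = 0 then 1 else 0) + (if m2 = 0 then card R2 else 0)"
      "card (R \<inter> (Zp_set - Zp_units)) = (if \<beta> - \<alpha> > 0 then 1 else 0) + (if m2 > 0 then card R2 else 0)"
      "card (R \<inter> (UNIV - Zp_set)) = (if \<beta> - \<alpha> < 0 then 1 else 0) + (if m2 < 0 then card R2 else 0)"
      using cS c1 H(5,6,7) by auto
    show ?thesis unfolding defs cc cT H(5) H(8) using False h H(9) by auto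
  qed
qed


end
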